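(* Let $\mathcal{A}$ be a complex Banach algebra with unity, $a,b,c,d\in\mathcal{A}$, and let $M$ be either $\begin{pmatrix}a&c\\0&b\end{pmatrix}$ or $\begin{pmatrix}a&0\\d&b\end{pmatrix}$ in $M_{2}(\mathcal{A})$. Then: (1) $a\in\mathcal{A}^{qnil}$ and $b\in\mathcal{A}^{qnil}$ if and only if $M\in M_{2}(\mathcal{A})^{qnil}$; (2) $a$ and $b$ are g$\pi$-Hirano invertible in $\mathcal{A}$ if and only if $M$ is g$\pi$-Hirano invertible in $M_{2}(\mathcal{A})$.
   Context: $M_{2}(\mathcal{A})$ is the Banach algebra of $2\times2$ matrices over $\mathcal{A}$. For a unital Banach algebra $\mathcal{B}$, $\mathcal{B}^{qnil}$ is the set of elements with spectrum $\{0\}$, and $a\in\mathcal{B}$ is g$\pi$-Hirano invertible if there exists $x\in\mathcal{B}$ with $xax=x$, $ax=xa$ and $a-a^{n+2}x\in\mathcal{B}^{qnil}$ for some positive integer $n$. *)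

theory Defs
  imports "HOL-Analysis.Analysis"
begin

text \<open>HOL has no class of complex vector spaces, so complex scalar
multiplication is added explicitly.\<close>

class calg_1 = ring_1 +
  fixes cscale :: "complex \<Rightarrow> 'a \<Rightarrow> 'a"
  assumes cscale_add_right: "cscale c (x + y) = cscale c x + cscale c y"
    and cscale_add_left: "cscale (c + e) x = cscale c x + cscale e x"
    and cscale_cscale: "cscale c (cscale e x) = cscale (c * e) x"
    and cscale_one: "cscale 1 x = x"
    and mult_cscale_left: "cscale c x * y = cscale c (x * y)"
    and mult_cscale_right: "x * cscale c y = cscale c (x * y)"

class cbanach_algebra_1 = calg_1 + real_normed_algebra_1 + banach +
  assumes scaleR_cscale: "scaleR r x = cscale (complex_of_real r) x"
    and norm_cscale: "norm (cscale c x) = cmod c * norm x"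

definition ring_invertible :: "'a::ring_1 \<Rightarrow> bool" where
  "ring_invertible x \<longleftrightarrow> (\<exists>y. x * y = 1 \<and> y * x = 1)"

definition cspectrum :: "'a::calg_1 \<Rightarrow> complex set" where
  "cspectrum a = {z. \<not> ring_invertible (a - cscale z 1)}"

definition qnil :: "'a::calg_1 \<Rightarrow> bool" where
  "qnil a \<longleftrightarrow> cspectrum a = {0}"

definition gpi_hirano :: "'a::calg_1 \<Rightarrow> bool" where
  "gpi_hirano a \<longleftrightarrow> (\<exists>x. x * a * x = x \<and> a * x = x * a \<and>
      (\<exists>n::nat. n > 0 \<and> qnil (a - a ^ (n + 2) * x)))"

datatype 'a m2 = M2 'a 'a 'a 'a  (* M2 a11 a12 a21 a22 *)

instantiation m2 :: (ring_1) ring_1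
begin
definition "0 = M2 0 0 0 0"
definition "1 = M2 1 0 0 1"
fun plus_m2 where "M2 a b c d + M2 e f g h = M2 (a + e) (b + f) (c + g) (d + h)"
fun minus_m2 where "M2 a b c d - M2 e f g h = M2 (a - e) (b - f) (c - g) (d - h)"
fun uminus_m2 where "- M2 a b c d = M2 (- a) (- b) (- c) (- d)"
fun times_m2 where "M2 a b c d * M2 e f g h =
  M2 (a * e + b * g) (a * f + b * h) (c * e + d * g) (c * f + d * h)"
instance
proof
  fix x y z :: "'a m2"
  show "x * y * z = x * (y * z)"
    by (cases x; cases y; cases z) (simp add: algebra_simps)
  show "x + y + z = x + (y + z)" by (cases x; cases y; cases z) (simp add: algebra_simps)
  show "x + y = y + x" by (cases x; cases y) (simp add: algebra_simps)
  show "0 + x = x" by (cases x) (simp add: zero_m2_def)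
  show "- x + x = 0" by (cases x) (simp add: zero_m2_def)
  show "x - y = x + - y" by (cases x; cases y) simp
  show "(x + y) * z = x * z + y * z" by (cases x; cases y; cases z) (simp add: algebra_simps)
  show "x * (y + z) = x * y + x * z" by (cases x; cases y; cases z) (simp add: algebra_simps)
  show "1 * x = x" by (cases x) (simp add: one_m2_def)
  show "x * 1 = x" by (cases x) (simp add: one_m2_def)
  show "(0::'a m2) \<noteq> 1" by (simp add: zero_m2_def one_m2_def)
qed
end

instantiation m2 :: (calg_1) calg_1
begin
fun cscale_m2 where "cscale_m2 k (M2 a b c d) = M2 (cscale k a) (cscale k b) (cscale k c) (cscale k d)"
instance
proof
  fix x y :: "'a m2" and c e :: complex
  show "cscale c (x + y) = cscale c x + cscale c y"
    by (cases x; cases y) (simp add: cscale_add_right)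
  show "cscale (c + e) x = cscale c x + cscale e x"
    by (cases x) (simp add: cscale_add_left)
  show "cscale c (cscale e x) = cscale (c * e) x"
    by (cases x) (simp add: cscale_cscale)
  show "cscale 1 x = x" by (cases x) (simp add: cscale_one)
  show "cscale c x * y = cscale c (x * y)"
    by (cases x; cases y) (simp add: mult_cscale_left cscale_add_right)
  show "x * cscale c y = cscale c (x * y)"
    by (cases x; cases y) (simp add: mult_cscale_right cscale_add_right)
qed
end

end

theory Submission
  imports Defs "HOL-Computational_Algebra.Formal_Power_Series"
begin


lemma cscale_zero_right[simp]: "cscale c (0::'a::calg_1) = 0"
proof -
  have "cscale c (0::'a) = cscale c 0 + cscale c 0" by (metis add_0 cscale_add_right)
  thus ?thesis by simp
qed

lemma cscale_zero_left[simp]: "cscale 0 (x::'a::calg_1) = 0"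
proof -
  have "cscale 0 x = cscale 0 x + cscale 0 x" by (metis add_0 cscale_add_left)
  thus ?thesis by simp
qed

lemma cscale_minus_right: "cscale c (- x) = - cscale c (x::'a::calg_1)"
proof -
  have "cscale c (- x) + cscale c x = 0" by (metis cscale_add_right cscale_zero_right left_minus)
  thus ?thesis by (simp add: eq_neg_iff_add_eq_0)
qed

lemma cscale_minus_left: "cscale (- c) x = - cscale c (x::'a::calg_1)"
proof -
  have "cscale (- c) x + cscale c x = 0" by (metis cscale_add_left cscale_zero_left left_minus)
  thus ?thesis by (simp add: eq_neg_iff_add_eq_0)
qed

lemma cscale_diff_right: "cscale c (x - y) = cscale c x - cscale c (y::'a::calg_1)"
  by (simp only: diff_conv_add_uminus cscale_add_right cscale_minus_right)

lemma cscale_diff_left: "cscale (c - e) x = cscale c x - cscale e (x::'a::calg_1)"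
  by (simp only: diff_conv_add_uminus cscale_add_left cscale_minus_left)

lemma cscale_sum_left: "cscale (sum f A) (x::'a::calg_1) = (\<Sum>i\<in>A. cscale (f i) x)"
  by (induct A rule: infinite_finite_induct) (auto simp: cscale_add_left)

lemma cscale_sum_right: "cscale c (sum f A) = (\<Sum>i\<in>A. cscale c (f i :: 'a::calg_1))"
  by (induct A rule: infinite_finite_induct) (auto simp: cscale_add_right)

lemma cscale1_mult: "cscale c 1 * y = cscale c (y::'a::calg_1)"
  by (simp add: mult_cscale_left)

lemma mult_cscale1: "y * cscale c 1 = cscale c (y::'a::calg_1)"
  by (simp add: mult_cscale_right)

lemma cscale_power: "(cscale c x) ^ n = cscale (c ^ n) (x ^ n :: 'a::calg_1)"
proof (induct n)
  case 0 thus ?case by (simp add: cscale_one)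
next
  case (Suc n)
  have "(cscale c x) ^ Suc n = cscale c x * cscale (c ^ n) (x ^ n)" using Suc by simp
  also have "\<dots> = cscale c (x * cscale (c ^ n) (x ^ n))" by (rule mult_cscale_left)
  also have "\<dots> = cscale c (cscale (c ^ n) (x * x ^ n))" by (simp only: mult_cscale_right)
  also have "\<dots> = cscale (c * c ^ n) (x * x ^ n)" by (rule cscale_cscale)
  also have "\<dots> = cscale (c ^ Suc n) (x ^ Suc n)" by simp
  finally show ?case .
qed

lemma cscale_of_real: "cscale (complex_of_real r) x = scaleR r (x::'a::cbanach_algebra_1)"
  by (simp add: scaleR_cscale)

definition rinv :: "'a::ring_1 \<Rightarrow> 'a" where
  "rinv x = (SOME y. x * y = 1 \<and> y * x = 1)"

lemma rinv: "ring_invertible x \<Longrightarrow> x * rinv x = 1 \<and> rinv x * x = 1"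
  unfolding ring_invertible_def rinv_def by (rule someI_ex)

lemma inv_unique: "x * y = 1 \<Longrightarrow> z * x = 1 \<Longrightarrow> y = (z::'a::ring_1)"
proof -
  assume a: "x * y = 1" "z * x = 1"
  have "y = (z * x) * y" using a by simp
  also have "\<dots> = z * (x * y)" by (simp add: mult.assoc)
  finally show ?thesis using a by simp
qed

lemma ring_invertibleI: "x * y = 1 \<Longrightarrow> y * x = 1 \<Longrightarrow> ring_invertible (x::'a::ring_1)"
  unfolding ring_invertible_def by blast

lemma rinv_eq: "x * y = 1 \<Longrightarrow> y * x = 1 \<Longrightarrow> rinv x = (y::'a::ring_1)"
proof -
  assume a: "x * y = 1" "y * x = 1"
  hence "ring_invertible x" by (rule ring_invertibleI)
  hence "x * rinv x = 1" using rinv by blast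
  thus ?thesis using inv_unique a by blast
qed

lemma ring_invertible_one[simp]: "ring_invertible (1::'a::ring_1)"
  by (rule ring_invertibleI[of 1 1]) auto

lemma ring_invertible_mult:
  assumes "ring_invertible x" "ring_invertible (y::'a::ring_1)"
  shows "ring_invertible (x * y)"
proof -
  obtain u where u: "x * u = 1" "u * x = 1" using assms(1) unfolding ring_invertible_def by blast
  obtain v where v: "y * v = 1" "v * y = 1" using assms(2) unfolding ring_invertible_def by blast
  have "x * y * (v * u) = x * (y * v) * u" by (simp add: mult.assoc)
  hence "x * y * (v * u) = 1" using u v by simp
  moreover have "(v * u) * (x * y) = v * (u * x) * y" by (simp add: mult.assoc)
  hence "(v * u) * (x * y) = 1" using u v by simp
  ultimately show ?thesis by (rule ring_invertibleI)
qed

lemma inv_commute: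
  assumes "x * z = z * x" "x * v = 1" "v * x = (1::'a::ring_1)"
  shows "v * z = z * v"
proof -
  have "v * z = v * z * (x * v)" using assms by simp
  also have "\<dots> = v * (z * x) * v" by (simp add: mult.assoc)
  also have "\<dots> = v * (x * z) * v" using assms by simp
  also have "\<dots> = (v * x) * z * v" by (simp add: mult.assoc)
  also have "\<dots> = z * v" using assms by simp
  finally show ?thesis .
qed

lemma rinv_commute:
  assumes "ring_invertible x" "x * z = z * x"
  shows "rinv x * z = z * rinv (x::'a::ring_1)"
  using inv_commute[OF assms(2)] rinv[OF assms(1)] by blast

lemma inv_factor_comm:
  assumes "ring_invertible (x * y)" "x * y = y * (x::'a::ring_1)"
  shows "ring_invertible x"
proof -
  obtain w where w: "x * y * w = 1" "w * (x * y) = 1" using assms(1) unfolding ring_invertible_def by blast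
  have c: "(x * y) * x = x * (x * y)"
  proof -
    have "(x * y) * x = x * (y * x)" by (simp only: mult.assoc)
    also have "\<dots> = x * (x * y)" by (simp only: assms(2))
    finally show ?thesis .
  qed
  have wx: "w * x = x * w" by (rule inv_commute[OF c w(1) w(2)])
  have "x * (y * w) = 1" using w(1) by (simp only: mult.assoc)
  moreover have "(y * w) * x = 1"
  proof -
    have "(y * w) * x = y * (w * x)" by (simp only: mult.assoc)
    also have "\<dots> = y * (x * w)" by (simp only: wx)
    also have "\<dots> = (y * x) * w" by (simp only: mult.assoc)
    also have "\<dots> = (x * y) * w" by (simp only: assms(2))
    finally show ?thesis using w(1) by simp
  qed
  ultimately show ?thesis by (rule ring_invertibleI)
qed

lemma inv_factor_comm2:
  assumes "ring_invertible (x * y)" "x * y = y * (x::'a::ring_1)"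
  shows "ring_invertible y"
proof -
  have a: "ring_invertible (y * x)" using assms(1) unfolding assms(2) .
  show ?thesis by (rule inv_factor_comm[OF a assms(2)[symmetric]])
qed

lemma inv_cscale:
  assumes "c \<noteq> 0" "ring_invertible (y::'a::calg_1)"
  shows "ring_invertible (cscale c y)"
proof -
  obtain v where v: "y * v = 1" "v * y = 1" using assms(2) unfolding ring_invertible_def by blast
  have "cscale c y * cscale (1/c) v = 1" using assms(1) v
    by (simp add: mult_cscale_left mult_cscale_right cscale_cscale cscale_one)
  moreover have "cscale (1/c) v * cscale c y = 1" using assms(1) v
    by (simp add: mult_cscale_left mult_cscale_right cscale_cscale cscale_one)
  ultimately show ?thesis by (rule ring_invertibleI)
qed

lemma inv_uminus: "ring_invertible (- y) \<longleftrightarrow> ring_invertible (y::'a::ring_1)"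
proof
  assume "ring_invertible (- y)"
  then obtain v where "- y * v = 1" "v * - y = 1" unfolding ring_invertible_def by blast
  hence "y * (- v) = 1" "(- v) * y = 1" by simp_all
  thus "ring_invertible y" by (rule ring_invertibleI)
next
  assume "ring_invertible y"
  then obtain v where "y * v = 1" "v * y = 1" unfolding ring_invertible_def by blast
  hence "(- y) * (- v) = 1" "(- v) * (- y) = 1" by simp_all
  thus "ring_invertible (- y)" by (rule ring_invertibleI)
qed

lemma power_inv: "x * v = 1 \<Longrightarrow> v * x = 1 \<Longrightarrow> x ^ n * v ^ n = (1::'a::ring_1)"
proof (induct n)
  case (Suc n)
  have e1: "x ^ Suc n = x ^ n * x" by (rule power_Suc2)
  have e2: "v ^ Suc n = v * v ^ n" by (rule power_Suc)
  have "x ^ Suc n * v ^ Suc n = x ^ n * (x * v) * v ^ n"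
    unfolding e1 e2 by (simp only: mult.assoc)
  thus ?case using Suc by simp
qed simp

definition qn :: "'a::calg_1 \<Rightarrow> bool" where
  "qn x \<longleftrightarrow> (\<forall>l. l \<noteq> 0 \<longrightarrow> ring_invertible (x - cscale l 1))"

section \<open>Neumann series\<close>

lemma neumann:
  fixes y :: "'a::{real_normed_algebra_1,banach}"
  assumes "summable (\<lambda>n. norm (y ^ n))"
  shows "(1 - y) * (\<Sum>n. y ^ n) = 1" "(\<Sum>n. y ^ n) * (1 - y) = 1"
proof -
  have s: "summable (\<lambda>n. y ^ n)" using assms by (rule summable_norm_cancel)
  have l: "(\<lambda>n. y ^ n) \<longlonglongrightarrow> 0" using s by (rule summable_LIMSEQ_zero)
  have t: "(\<lambda>n. y ^ n - y ^ Suc n) sums 1"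
    using telescope_sums'[OF l] by simp
  have "(1 - y) * (\<Sum>n. y ^ n) = (\<Sum>n. (1 - y) * y ^ n)" using suminf_mult[OF s] by simp
  also have "\<dots> = (\<Sum>n. y ^ n - y ^ Suc n)" by (simp add: algebra_simps power_commutes)
  also have "\<dots> = 1" using t by (rule sums_unique[symmetric])
  finally show "(1 - y) * (\<Sum>n. y ^ n) = 1" .
  have "(\<Sum>n. y ^ n) * (1 - y) = (\<Sum>n. y ^ n * (1 - y))" using suminf_mult2[OF s] by simp
  also have "\<dots> = (\<Sum>n. y ^ n - y ^ Suc n)" by (simp add: algebra_simps power_commutes)
  also have "\<dots> = 1" using t by (rule sums_unique[symmetric])
  finally show "(\<Sum>n. y ^ n) * (1 - y) = 1" .
qed

lemma neumann_inv:
  fixes y :: "'a::{real_normed_algebra_1,banach}"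
  assumes "summable (\<lambda>n. norm (y ^ n))"
  shows "ring_invertible (1 - y)"
  using neumann[OF assms] by (rule ring_invertibleI)

lemma inv_cont:
  fixes x v x' v' :: "'a::real_normed_algebra_1"
  assumes "x * v = 1" "v * x = 1" "x' * v' = 1" "v' * x' = 1"
    and h: "norm v * norm (x - x') \<le> 1/2"
  shows "norm (v' - v) \<le> 2 * norm v * (norm v * norm (x - x'))"
proof -
  have e: "v' - v = v' * (x - x') * v"
  proof -
    have "v' * (x - x') * v = v' * (x * v) - (v' * x') * v" by (simp add: algebra_simps)
    thus ?thesis using assms by simp
  qed
  define D where "D = norm (v' - v)"
  define hh where "hh = norm v * norm (x - x')"
  have "D \<le> norm v' * norm (x - x') * norm v"
    unfolding D_def e by (metis norm_mult_ineq order_trans mult_right_mono norm_ge_zero)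
  also have "\<dots> = norm v' * hh" unfolding hh_def by simp
  also have "\<dots> \<le> (norm v + D) * hh"
  proof (rule mult_right_mono)
    show "norm v' \<le> norm v + D" unfolding D_def using norm_triangle_ineq[of v "v' - v"] by simp
    show "0 \<le> hh" unfolding hh_def by simp
  qed
  finally have "D \<le> (norm v + D) * hh" .
  hence "D * (1 - hh) \<le> norm v * hh" by (simp add: algebra_simps)
  moreover have "1 - hh \<ge> 1/2" using h unfolding hh_def by simp
  moreover have "D \<ge> 0" "hh \<ge> 0" "norm v \<ge> 0" unfolding D_def hh_def by auto
  ultimately have "D * (1/2) \<le> norm v * hh"
    using mult_left_mono[of "1/2" "1 - hh" D] by linarith
  hence "D \<le> 2 * (norm v * hh)" by linarith
  thus ?thesis unfolding D_def hh_def by simp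
qed


section \<open>Roots of unity and averaging\<close>

lemma geom_ring:
  fixes z :: "'a::ring_1"
  shows "(1 - z) * (\<Sum>j<n. z ^ j) = 1 - z ^ n \<and> (\<Sum>j<n. z ^ j) * (1 - z) = 1 - z ^ n"
proof (induct n)
  case 0 thus ?case by simp
next
  case (Suc n)
  have a: "(1 - z) * (\<Sum>j<Suc n. z ^ j) = (1 - z) * (\<Sum>j<n. z ^ j) + (1 - z) * z ^ n"
    by (simp add: distrib_left)
  also have "\<dots> = 1 - z ^ n + (z ^ n - z * z ^ n)" using Suc by (simp add: left_diff_distrib)
  also have "\<dots> = 1 - z ^ Suc n" by simp
  finally have A: "(1 - z) * (\<Sum>j<Suc n. z ^ j) = 1 - z ^ Suc n" .
  have "(\<Sum>j<Suc n. z ^ j) * (1 - z) = (\<Sum>j<n. z ^ j) * (1 - z) + z ^ n * (1 - z)"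
    by (simp add: distrib_right)
  also have "\<dots> = 1 - z ^ n + (z ^ n - z ^ n * z)" using Suc by (simp add: right_diff_distrib)
  also have "\<dots> = 1 - z ^ Suc n" by (simp add: power_commutes)
  finally show ?case using A by simp
qed

definition omega :: "nat \<Rightarrow> complex" where
  "omega n = exp (2 * of_real pi * \<i> / of_nat n)"

lemma omega_pow: "omega n ^ j = exp (2 * of_real pi * \<i> * of_nat j / of_nat n)"
proof -
  have "omega n ^ j = exp (of_nat j * (2 * of_real pi * \<i> / of_nat n))"
    unfolding omega_def by (rule exp_of_nat_mult[symmetric])
  thus ?thesis by (simp add: field_simps)
qed

lemma omega_n: "n \<ge> 1 \<Longrightarrow> omega n ^ n = 1"
  unfolding omega_pow using complex_root_unity[of n n] by simp

lemma norm_omega: "cmod (omega n ^ k) = 1"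
  unfolding omega_pow by (simp add: norm_exp_eq_Re)

lemma omega_sum:
  assumes "n \<ge> 1" "0 < j" "j < n"
  shows "(\<Sum>k<n. (omega n ^ k) ^ j) = 0"
proof -
  define z where "z = omega n ^ j"
  have z1: "z \<noteq> 1" unfolding z_def omega_pow using complex_root_unity_eq_1[OF assms(1), of j] assms
    by (auto dest: dvd_imp_le)
  have "z ^ n = omega n ^ (j * n)" unfolding z_def by (rule power_mult[symmetric])
  also have "\<dots> = (omega n ^ n) ^ j" by (simp only: mult.commute[of j n] power_mult)
  also have "\<dots> = 1" using omega_n[OF assms(1)] by simp
  finally have zn: "z ^ n = 1" .
  have "(\<Sum>k<n. (omega n ^ k) ^ j) = (\<Sum>k<n. z ^ k)"
    unfolding z_def by (simp only: power_mult[symmetric] mult.commute)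
  also have "\<dots> = 0" using sum_gp_strict[of z n] z1 zn by simp
  finally show ?thesis .
qed

lemma avg_identity:
  fixes y :: "'a::calg_1"
  assumes n: "n \<ge> 1"
    and g: "\<And>k. k < n \<Longrightarrow> (1 - cscale (omega n ^ k) y) * g k = 1 \<and> g k * (1 - cscale (omega n ^ k) y) = 1"
  shows "(1 - y ^ n) * cscale (1 / of_nat n) (\<Sum>k<n. g k) = 1
       \<and> cscale (1 / of_nat n) (\<Sum>k<n. g k) * (1 - y ^ n) = 1"
proof -
  define T where "T k = (\<Sum>j<n. (cscale (omega n ^ k) y) ^ j)" for k
  have zn: "(cscale (omega n ^ k) y) ^ n = y ^ n" for k
  proof -
    have "(omega n ^ k) ^ n = omega n ^ (k * n)" by (rule power_mult[symmetric])
    also have "\<dots> = (omega n ^ n) ^ k" by (simp only: mult.commute[of k n] power_mult)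
    finally have "(omega n ^ k) ^ n = 1" using omega_n[OF n] by simp
    thus ?thesis by (simp add: cscale_power cscale_one)
  qed
  have T1: "(1 - cscale (omega n ^ k) y) * T k = 1 - y ^ n" for k
    using geom_ring[of "cscale (omega n ^ k) y" n] zn unfolding T_def by simp
  have T2: "T k * (1 - cscale (omega n ^ k) y) = 1 - y ^ n" for k
    using geom_ring[of "cscale (omega n ^ k) y" n] zn unfolding T_def by simp
  have gl: "g k * (1 - y ^ n) = T k" if "k < n" for k
  proof -
    have "g k * (1 - y ^ n) = (g k * (1 - cscale (omega n ^ k) y)) * T k"
      by (simp only: T1 mult.assoc)
    thus ?thesis using g[OF that] by simp
  qed
  have gr: "(1 - y ^ n) * g k = T k" if "k < n" for k
  proof -
    have "(1 - y ^ n) * g k = (T k * (1 - cscale (omega n ^ k) y)) * g k"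
      by (simp only: T2)
    also have "\<dots> = T k * ((1 - cscale (omega n ^ k) y) * g k)" by (rule mult.assoc)
    finally have "(1 - y ^ n) * g k = T k * ((1 - cscale (omega n ^ k) y) * g k)" .
    thus ?thesis using g[OF that] by simp
  qed
  have sumT: "(\<Sum>k<n. T k) = cscale (of_nat n) 1"
  proof -
    have "(\<Sum>k<n. T k) = (\<Sum>k<n. \<Sum>j<n. cscale ((omega n ^ k) ^ j) (y ^ j))"
      unfolding T_def by (simp add: cscale_power)
    also have "\<dots> = (\<Sum>j<n. \<Sum>k<n. cscale ((omega n ^ k) ^ j) (y ^ j))"
      by (rule sum.swap)
    also have "\<dots> = (\<Sum>j<n. cscale (\<Sum>k<n. (omega n ^ k) ^ j) (y ^ j))"
      by (simp add: cscale_sum_left)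
    also have "\<dots> = (\<Sum>j<n. if j = 0 then cscale (of_nat n) 1 else 0)"
    proof (rule sum.cong)
      fix j assume "j \<in> {..<n}"
      thus "cscale (\<Sum>k<n. (omega n ^ k) ^ j) (y ^ j) = (if j = 0 then cscale (of_nat n) 1 else 0)"
        using omega_sum[OF n, of j] by auto
    qed simp
    also have "\<dots> = cscale (of_nat n) 1" using n by (simp add: sum.delta)
    finally show ?thesis .
  qed
  have nz: "(of_nat n :: complex) \<noteq> 0" using n by simp
  have "(1 - y ^ n) * cscale (1 / of_nat n) (\<Sum>k<n. g k) = cscale (1 / of_nat n) (\<Sum>k<n. (1 - y ^ n) * g k)"
    by (simp add: mult_cscale_right sum_distrib_left)
  also have "\<dots> = cscale (1 / of_nat n) (\<Sum>k<n. T k)" using gr by simp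
  also have "\<dots> = 1" using nz by (simp add: sumT cscale_cscale cscale_one)
  finally have A: "(1 - y ^ n) * cscale (1 / of_nat n) (\<Sum>k<n. g k) = 1" .
  have "cscale (1 / of_nat n) (\<Sum>k<n. g k) * (1 - y ^ n) = cscale (1 / of_nat n) (\<Sum>k<n. g k * (1 - y ^ n))"
    by (simp add: mult_cscale_left sum_distrib_right)
  also have "\<dots> = cscale (1 / of_nat n) (\<Sum>k<n. T k)" using gl by simp
  also have "\<dots> = 1" using nz by (simp add: sumT cscale_cscale cscale_one)
  finally show ?thesis using A by simp
qed



section \<open>Decay of powers when the spectrum is contained in zero\<close>

definition Gf :: "'a::calg_1 \<Rightarrow> complex \<Rightarrow> 'a" where
  "Gf x \<mu> = rinv (1 - cscale \<mu> x)"

definition Af :: "'a::calg_1 \<Rightarrow> nat \<Rightarrow> complex \<Rightarrow> 'a" where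
  "Af x n \<mu> = cscale (1 / of_nat n) (\<Sum>k<n. Gf x (omega n ^ k * \<mu>))"

lemma G_cont:
  fixes x :: "'a::cbanach_algebra_1"
  assumes H: "\<And>\<mu>. ring_invertible (1 - cscale \<mu> x)"
  shows "continuous_on UNIV (Gf x)"
proof -
  have "\<forall>e>0. \<exists>d>0. \<forall>\<mu>'. dist \<mu>' \<mu> < d \<longrightarrow> dist (Gf x \<mu>') (Gf x \<mu>) < e" for \<mu>
  proof (intro allI impI)
    fix e :: real assume e: "e > 0"
    define K where "K = norm (Gf x \<mu>)"
    define B where "B = (K + 1) * (norm x + 1)"
    have K0: "K \<ge> 0" unfolding K_def by simp
    have "(1::real) * 1 \<le> (K + 1) * (norm x + 1)" using K0 by (intro mult_mono) auto
    hence B1: "B \<ge> 1" unfolding B_def by simp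
    have KB: "K * norm x \<le> B" unfolding B_def using K0 by (simp add: mult_mono)
    define d where "d = min (1 / (2*B)) (e / (2 * B * (K+1)))"
    have d0: "d > 0" unfolding d_def using B1 K0 e by simp
    show "\<exists>d>0. \<forall>\<mu>'. dist \<mu>' \<mu> < d \<longrightarrow> dist (Gf x \<mu>') (Gf x \<mu>) < e"
    proof (intro exI[of _ d] conjI allI impI d0)
      fix \<mu>' assume "dist \<mu>' \<mu> < d"
      hence dm: "cmod (\<mu>' - \<mu>) < d" by (simp add: dist_norm)
      define c where "c = cmod (\<mu>' - \<mu>)"
      have c0: "c \<ge> 0" unfolding c_def by simp
      have diff: "(1 - cscale \<mu> x) - (1 - cscale \<mu>' x) = cscale (\<mu>' - \<mu>) x"
        by (simp add: cscale_diff_left)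
      have nd: "norm ((1 - cscale \<mu> x) - (1 - cscale \<mu>' x)) = c * norm x"
        unfolding diff c_def by (simp add: norm_cscale)
      have Kc: "K * (c * norm x) \<le> B * c" using mult_right_mono[OF KB c0] by (simp add: ac_simps)
      have "B * d \<le> B * (1 / (2*B))" unfolding d_def using B1 by (intro mult_left_mono) auto
      also have "\<dots> = 1/2" using B1 by simp
      finally have Bd: "B * d \<le> 1/2" .
      have "B * c < B * d" using dm B1 unfolding c_def by (intro mult_strict_left_mono) auto
      hence Bc: "B * c < 1/2" using Bd by linarith
      have h: "norm (rinv (1 - cscale \<mu> x)) * norm ((1 - cscale \<mu> x) - (1 - cscale \<mu>' x)) \<le> 1/2"
        using Kc Bc unfolding nd K_def Gf_def by linarith
      have r1: "(1 - cscale \<mu> x) * rinv (1 - cscale \<mu> x) = 1" "rinv (1 - cscale \<mu> x) * (1 - cscale \<mu> x) = 1"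
        using rinv[OF H] by auto
      have r2: "(1 - cscale \<mu>' x) * rinv (1 - cscale \<mu>' x) = 1" "rinv (1 - cscale \<mu>' x) * (1 - cscale \<mu>' x) = 1"
        using rinv[OF H] by auto
      have "norm (Gf x \<mu>' - Gf x \<mu>) \<le> 2 * K * (K * (c * norm x))"
        using inv_cont[OF r1 r2 h] unfolding nd K_def Gf_def by simp
      also have "\<dots> \<le> 2 * K * (B * c)"
        using Kc K0 by (intro mult_left_mono) auto
      also have "\<dots> \<le> 2 * (K + 1) * (B * c)"
        using B1 c0 by (intro mult_right_mono) auto
      also have "\<dots> < 2 * (K + 1) * (B * d)"
        using dm B1 K0 unfolding c_def by (intro mult_strict_left_mono) auto
      also have "\<dots> \<le> e"
      proof -
        have "d \<le> e / (2 * B * (K+1))" unfolding d_def by simp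
        hence "2 * (K + 1) * B * d \<le> 2 * (K + 1) * B * (e / (2 * B * (K+1)))"
          using B1 K0 by (intro mult_left_mono) auto
        also have "\<dots> = (2 * B * (K+1)) * (e / (2 * B * (K+1)))" by (simp add: ac_simps)
        also have "\<dots> = e"
        proof -
          have "2 * B * (K+1) \<noteq> 0" using B1 K0 by (simp add: add_nonneg_eq_0_iff)
          thus ?thesis by simp
        qed
        finally show ?thesis by (simp add: ac_simps)
      qed
      finally show "dist (Gf x \<mu>') (Gf x \<mu>) < e" by (simp add: dist_norm)
    qed
  qed
  thus ?thesis unfolding continuous_on_iff by auto
qed

lemma A_inv:
  fixes x :: "'a::calg_1"
  assumes H: "\<And>\<mu>. ring_invertible (1 - cscale \<mu> x)" and n: "n \<ge> 1"
  shows "(1 - cscale (\<mu> ^ n) (x ^ n)) * Af x n \<mu> = 1 \<and> Af x n \<mu> * (1 - cscale (\<mu> ^ n) (x ^ n)) = 1"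
proof -
  have "(1 - (cscale \<mu> x) ^ n) * cscale (1 / of_nat n) (\<Sum>k<n. Gf x (omega n ^ k * \<mu>)) = 1
       \<and> cscale (1 / of_nat n) (\<Sum>k<n. Gf x (omega n ^ k * \<mu>)) * (1 - (cscale \<mu> x) ^ n) = 1"
  proof (rule avg_identity[OF n])
    fix k assume "k < n"
    have e: "cscale (omega n ^ k) (cscale \<mu> x) = cscale (omega n ^ k * \<mu>) x" by (rule cscale_cscale)
    show "(1 - cscale (omega n ^ k) (cscale \<mu> x)) * Gf x (omega n ^ k * \<mu>) = 1 \<and>
          Gf x (omega n ^ k * \<mu>) * (1 - cscale (omega n ^ k) (cscale \<mu> x)) = 1"
      unfolding e Gf_def by (rule rinv[OF H])
  qed
  thus ?thesis unfolding Af_def cscale_power .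
qed

lemma A_diff:
  fixes x :: "'a::cbanach_algebra_1"
  assumes n: "n \<ge> 1"
    and b: "\<And>k. k < n \<Longrightarrow> norm (Gf x (omega n ^ k * \<mu>) - Gf x (omega n ^ k * \<mu>')) \<le> \<epsilon>"
  shows "norm (Af x n \<mu> - Af x n \<mu>') \<le> \<epsilon>"
proof -
  have "Af x n \<mu> - Af x n \<mu>' = cscale (1 / of_nat n) (\<Sum>k<n. Gf x (omega n ^ k * \<mu>) - Gf x (omega n ^ k * \<mu>'))"
    unfolding Af_def by (simp add: cscale_diff_right sum_subtractf)
  hence "norm (Af x n \<mu> - Af x n \<mu>') = (1 / real n) * norm (\<Sum>k<n. Gf x (omega n ^ k * \<mu>) - Gf x (omega n ^ k * \<mu>'))"
    by (simp add: norm_cscale norm_divide)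
  also have "\<dots> \<le> (1 / real n) * (\<Sum>k<n. \<epsilon>)"
    by (intro mult_left_mono sum_norm_le b) auto
  also have "\<dots> = \<epsilon>" using n by simp
  finally show ?thesis .
qed


lemma T2_step:
  fixes x :: "'a::cbanach_algebra_1"
  assumes H: "\<And>\<mu>. ring_invertible (1 - cscale \<mu> x)"
    and uc: "\<And>\<mu> \<mu>'. cmod \<mu> \<le> Rb \<Longrightarrow> cmod \<mu>' \<le> Rb \<Longrightarrow> cmod (\<mu>' - \<mu>) < \<delta> \<Longrightarrow> norm (Gf x \<mu>' - Gf x \<mu>) < 1/4"
    and \<delta>: "\<delta> > 0" and \<rho>: "\<rho> \<ge> 0" "\<rho> + \<delta>/2 \<le> Rb"
    and P: "(\<lambda>n. \<rho> ^ n * norm (x ^ n)) \<longlonglongrightarrow> 0"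
  shows "(\<lambda>n. (\<rho> + \<delta>/4) ^ n * norm (x ^ n)) \<longlonglongrightarrow> 0"
proof -
  define \<rho>' where "\<rho>' = \<rho> + \<delta>/2"
  have \<rho>'0: "\<rho>' > 0" unfolding \<rho>'_def using \<rho> \<delta> by simp
  have ev1: "eventually (\<lambda>n. \<rho> ^ n * norm (x ^ n) < 1/8) sequentially"
    using order_tendstoD(2)[OF P, of "1/8"] by simp
  have nh: "norm (cscale (complex_of_real r ^ n) (x ^ n)) = r ^ n * norm (x ^ n)" if "r \<ge> 0" for r n
    using that by (simp add: norm_cscale norm_power)
  have ev2: "eventually (\<lambda>n. \<rho>' ^ n * norm (x ^ n) \<le> 1) sequentially"
    using eventually_ge_at_top[of 1] ev1
  proof eventually_elim
    case (elim n)
    define h where "h = cscale (complex_of_real \<rho> ^ n) (x ^ n)"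
    define h' where "h' = cscale (complex_of_real \<rho>' ^ n) (x ^ n)"
    have nh1: "norm h = \<rho> ^ n * norm (x ^ n)" unfolding h_def using nh \<rho> by simp
    have nh2: "norm h' = \<rho>' ^ n * norm (x ^ n)" unfolding h'_def using nh \<rho>'0 by simp
    have I1: "(1 - h) * Af x n (complex_of_real \<rho>) = 1" "Af x n (complex_of_real \<rho>) * (1 - h) = 1"
      using A_inv[OF H elim(1)] unfolding h_def by auto
    have I2: "(1 - h') * Af x n (complex_of_real \<rho>') = 1" "Af x n (complex_of_real \<rho>') * (1 - h') = 1"
      using A_inv[OF H elim(1)] unfolding h'_def by auto
    have one: "(1::'a) * 1 = 1" by simp
    have "norm (1::'a) * norm (1 - (1 - h)) \<le> 1/2" using nh1 elim(2) by simp
    from inv_cont[OF one one I1 this]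
    have A1: "norm (Af x n (complex_of_real \<rho>) - 1) \<le> 1/4" using nh1 elim(2) by simp
    have A2: "norm (Af x n (complex_of_real \<rho>') - Af x n (complex_of_real \<rho>)) \<le> 1/4"
    proof (rule A_diff[OF elim(1)])
      fix k assume "k < n"
      have n1: "cmod (omega n ^ k * complex_of_real \<rho>) = \<rho>" using \<rho> norm_omega[of n k] by (simp add: norm_mult)
      have n2: "cmod (omega n ^ k * complex_of_real \<rho>') = \<rho>'" using \<rho>'0 norm_omega[of n k] by (simp add: norm_mult)
      have n3: "cmod (omega n ^ k * complex_of_real \<rho> - omega n ^ k * complex_of_real \<rho>') = \<delta>/2"
      proof -
        have "omega n ^ k * complex_of_real \<rho> - omega n ^ k * complex_of_real \<rho>' = omega n ^ k * complex_of_real (\<rho> - \<rho>')"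
          by (simp add: algebra_simps)
        moreover have "cmod (complex_of_real (\<rho> - \<rho>')) = \<bar>\<rho> - \<rho>'\<bar>" by (rule norm_of_real)
        ultimately have "cmod (omega n ^ k * complex_of_real \<rho> - omega n ^ k * complex_of_real \<rho>') = \<bar>\<rho> - \<rho>'\<bar>"
          using norm_omega[of n k] by (simp only: norm_mult) simp
        thus ?thesis unfolding \<rho>'_def using \<delta> by simp
      qed
      have "norm (Gf x (omega n ^ k * complex_of_real \<rho>') - Gf x (omega n ^ k * complex_of_real \<rho>)) < 1/4"
      proof (rule uc)
        show "cmod (omega n ^ k * complex_of_real \<rho>) \<le> Rb" using n1 \<rho> \<delta> by simp
        show "cmod (omega n ^ k * complex_of_real \<rho>') \<le> Rb" using n2 \<rho> unfolding \<rho>'_def by simp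
        show "cmod (omega n ^ k * complex_of_real \<rho>' - omega n ^ k * complex_of_real \<rho>) < \<delta>"
          using n3 \<delta> by (simp add: norm_minus_commute)
      qed
      thus "norm (Gf x (omega n ^ k * complex_of_real \<rho>') - Gf x (omega n ^ k * complex_of_real \<rho>)) \<le> 1/4" by simp
    qed
    have A3: "norm (1 - Af x n (complex_of_real \<rho>')) \<le> 1/2"
    proof -
      have "1 - Af x n (complex_of_real \<rho>') = - ((Af x n (complex_of_real \<rho>') - Af x n (complex_of_real \<rho>)) + (Af x n (complex_of_real \<rho>) - 1))"
        by simp
      hence "norm (1 - Af x n (complex_of_real \<rho>')) \<le> norm (Af x n (complex_of_real \<rho>') - Af x n (complex_of_real \<rho>)) + norm (Af x n (complex_of_real \<rho>) - 1)"
        by (metis norm_minus_cancel norm_triangle_ineq)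
      thus ?thesis using A1 A2 by simp
    qed
    have "norm (1::'a) * norm (1 - Af x n (complex_of_real \<rho>')) \<le> 1/2" using A3 by simp
    from inv_cont[OF one one I2(2) I2(1) this]
    have "norm ((1 - h') - 1) \<le> 1" using A3 by simp
    thus ?case using nh2 by simp
  qed
  define q where "q = (\<rho> + \<delta>/4) / \<rho>'"
  have q0: "q \<ge> 0" and q1: "q < 1" unfolding q_def \<rho>'_def using \<rho> \<delta> by (auto simp: field_simps)
  have "(\<lambda>n. q ^ n) \<longlonglongrightarrow> 0" using q0 q1 by (intro LIMSEQ_power_zero) auto
  moreover have "eventually (\<lambda>n. norm ((\<rho> + \<delta>/4) ^ n * norm (x ^ n)) \<le> q ^ n) sequentially"
    using ev2
  proof eventually_elim
    case (elim n)
    have r: "\<rho> + \<delta>/4 = q * \<rho>'" unfolding q_def using \<rho>'0 by simp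
    have "norm ((\<rho> + \<delta>/4) ^ n * norm (x ^ n)) = q ^ n * (\<rho>' ^ n * norm (x ^ n))"
      unfolding r using q0 \<rho>'0 by (simp add: power_mult_distrib abs_mult)
    also have "\<dots> \<le> q ^ n * 1" using elim q0 by (intro mult_left_mono) auto
    finally show ?case by simp
  qed
  ultimately show ?thesis by (rule Lim_null_comparison[rotated])
qed

lemma T2:
  fixes x :: "'a::cbanach_algebra_1"
  assumes H: "\<And>\<mu>. ring_invertible (1 - cscale \<mu> x)" and \<rho>: "\<rho> \<ge> 0"
  shows "(\<lambda>n. \<rho> ^ n * norm (x ^ n)) \<longlonglongrightarrow> 0"
proof -
  define Rb where "Rb = \<rho> + 2"
  have "uniformly_continuous_on (cball 0 Rb) (Gf x)"
    by (rule compact_uniformly_continuous[OF continuous_on_subset[OF G_cont[OF H]] compact_cball]) simp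
  then obtain \<delta>0 where \<delta>0: "\<delta>0 > 0"
    "\<And>\<mu> \<mu>'. \<mu> \<in> cball 0 Rb \<Longrightarrow> \<mu>' \<in> cball 0 Rb \<Longrightarrow> dist \<mu>' \<mu> < \<delta>0 \<Longrightarrow> dist (Gf x \<mu>') (Gf x \<mu>) < 1/4"
    unfolding uniformly_continuous_on_def by (metis divide_pos_pos zero_less_numeral zero_less_one)
  define \<delta> where "\<delta> = min \<delta>0 1"
  have \<delta>: "\<delta> > 0" "\<delta> \<le> 1" unfolding \<delta>_def using \<delta>0 by auto
  have uc: "norm (Gf x \<mu>' - Gf x \<mu>) < 1/4" if "cmod \<mu> \<le> Rb" "cmod \<mu>' \<le> Rb" "cmod (\<mu>' - \<mu>) < \<delta>" for \<mu> \<mu>'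
    using \<delta>0(2)[of \<mu> \<mu>'] that unfolding \<delta>_def by (simp add: dist_norm)
  have base: "(\<lambda>n. 0 ^ n * norm (x ^ n)) \<longlonglongrightarrow> (0::real)"
  proof (rule tendsto_eventually)
    show "eventually (\<lambda>n. (0::real) ^ n * norm (x ^ n) = 0) sequentially"
      using eventually_ge_at_top[of 1] by eventually_elim simp
  qed
  have ind: "real k * \<delta> / 4 \<le> \<rho> + 1 \<longrightarrow> (\<lambda>n. (real k * \<delta> / 4) ^ n * norm (x ^ n)) \<longlonglongrightarrow> 0" for k
  proof (induct k)
    case 0 thus ?case using base by simp
  next
    case (Suc k)
    show ?case
    proof
      assume a: "real (Suc k) * \<delta> / 4 \<le> \<rho> + 1"
      have "real k * \<delta> / 4 \<le> \<rho> + 1" using a \<delta> by (simp add: field_simps)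
      hence IH: "(\<lambda>n. (real k * \<delta> / 4) ^ n * norm (x ^ n)) \<longlonglongrightarrow> 0" using Suc by simp
      have "(\<lambda>n. (real k * \<delta> / 4 + \<delta>/4) ^ n * norm (x ^ n)) \<longlonglongrightarrow> 0"
        by (rule T2_step[OF H uc \<delta>(1) _ _ IH]) (use a \<delta> in \<open>auto simp: Rb_def field_simps\<close>)
      moreover have "real k * \<delta> / 4 + \<delta>/4 = real (Suc k) * \<delta> / 4" by (simp add: field_simps)
      ultimately show "(\<lambda>n. (real (Suc k) * \<delta> / 4) ^ n * norm (x ^ n)) \<longlonglongrightarrow> 0" by simp
    qed
  qed
  define k where "k = nat \<lceil>4 * \<rho> / \<delta>\<rceil>"
  have y0: "4 * \<rho> / \<delta> \<ge> 0" using \<rho> \<delta> by simp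
  have kk: "real k = of_int \<lceil>4 * \<rho> / \<delta>\<rceil>" unfolding k_def using y0 by simp
  have k1: "real k \<ge> 4 * \<rho> / \<delta>" unfolding kk by simp
  have k2: "real k < 4 * \<rho> / \<delta> + 1" unfolding kk using ceiling_correct[of "4 * \<rho> / \<delta>"] by linarith
  have r1: "\<rho> \<le> real k * \<delta> / 4" using k1 \<delta> by (simp add: field_simps)
  have r2: "real k * \<delta> / 4 \<le> \<rho> + 1"
  proof -
    have "real k * \<delta> < (4 * \<rho> / \<delta> + 1) * \<delta>" using k2 \<delta> by (intro mult_strict_right_mono) auto
    also have "\<dots> = 4 * \<rho> + \<delta>" using \<delta> by (simp add: field_simps)
    finally show ?thesis using \<delta> by simp
  qed
  have L: "(\<lambda>n. (real k * \<delta> / 4) ^ n * norm (x ^ n)) \<longlonglongrightarrow> 0" using ind r2 by blast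
  show ?thesis
  proof (rule Lim_null_comparison[OF _ L])
    show "eventually (\<lambda>n. norm (\<rho> ^ n * norm (x ^ n)) \<le> (real k * \<delta> / 4) ^ n * norm (x ^ n)) sequentially"
      using \<rho> r1 by (intro always_eventually allI) (simp add: abs_mult mult_right_mono power_mono)
  qed
qed


section \<open>Characterisations of quasinilpotence\<close>

definition nq :: "'a::real_normed_algebra_1 \<Rightarrow> bool" where
  "nq x \<longleftrightarrow> (\<forall>\<rho>\<ge>0. (\<lambda>n. \<rho> ^ n * norm (x ^ n)) \<longlonglongrightarrow> 0)"

lemma eq1: "l \<noteq> 0 \<Longrightarrow> x - cscale l 1 = cscale (- l) (1 - cscale (1 / l) (x::'a::calg_1))"
  by (simp add: cscale_diff_right cscale_cscale cscale_minus_left cscale_one)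

lemma eq2: "l \<noteq> 0 \<Longrightarrow> 1 - cscale l x = cscale (- l) (x - cscale (1 / l) (1::'a::calg_1))"
  by (simp add: cscale_diff_right cscale_cscale cscale_minus_left cscale_one)

lemma qn_allinv: "qn (x::'a::calg_1) \<Longrightarrow> ring_invertible (1 - cscale \<mu> x)"
proof (cases "\<mu> = 0")
  case True thus ?thesis by simp
next
  case False
  assume "qn x"
  hence "ring_invertible (x - cscale (1 / \<mu>) 1)" unfolding qn_def using False by simp
  thus ?thesis unfolding eq2[OF False] using False by (intro inv_cscale) auto
qed

lemma allinv_qn: "(\<And>\<mu>. ring_invertible (1 - cscale \<mu> (x::'a::calg_1))) \<Longrightarrow> qn x"
  unfolding qn_def using eq1 inv_cscale by (metis neg_equal_0_iff_equal)

lemma qn_nq: "qn (x::'a::cbanach_algebra_1) \<Longrightarrow> nq x"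
  unfolding nq_def using T2 qn_allinv by blast

lemma nq_qn:
  fixes x :: "'a::cbanach_algebra_1"
  assumes "nq x" shows "qn x"
  unfolding qn_def
proof (intro allI impI)
  fix l :: complex assume l: "l \<noteq> 0"
  define y where "y = cscale (1 / l) x"
  have ny: "norm (y ^ n) = (1 / cmod l) ^ n * norm (x ^ n)" for n
    unfolding y_def cscale_power by (simp add: norm_cscale norm_power norm_divide)
  have "(\<lambda>n. (2 / cmod l) ^ n * norm (x ^ n)) \<longlonglongrightarrow> 0" using assms l unfolding nq_def by simp
  hence ev: "eventually (\<lambda>n. (2 / cmod l) ^ n * norm (x ^ n) < 1) sequentially"
    using order_tendstoD(2) by fastforce
  have "summable (\<lambda>n. norm (y ^ n))"
  proof (rule summable_comparison_test_ev)
    show "summable (\<lambda>n. (1/2::real) ^ n)" by (rule summable_geometric) simp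
    show "eventually (\<lambda>n. norm (norm (y ^ n)) \<le> (1/2) ^ n) sequentially"
      using ev
    proof eventually_elim
      case (elim n)
      have "norm (norm (y ^ n)) = (1/2) ^ n * ((2 / cmod l) ^ n * norm (x ^ n))"
        unfolding ny by (simp add: power_mult_distrib[symmetric] field_simps)
      also have "\<dots> \<le> (1/2) ^ n * 1" using elim by (intro mult_left_mono) auto
      finally show ?case by simp
    qed
  qed
  hence "ring_invertible (1 - y)" by (rule neumann_inv)
  thus "ring_invertible (x - cscale l 1)" unfolding eq1[OF l] y_def using l by (intro inv_cscale) auto
qed

lemma nq_not_inv:
  fixes x :: "'a::cbanach_algebra_1"
  assumes "nq x" shows "\<not> ring_invertible x"
proof
  assume "ring_invertible x"
  then obtain v where v: "x * v = 1" "v * x = 1" unfolding ring_invertible_def by blast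
  have ge: "1 \<le> norm v ^ n * norm (x ^ n)" for n
  proof -
    have "1 = norm (x ^ n * v ^ n)" using power_inv[OF v] by simp
    also have "\<dots> \<le> norm (x ^ n) * norm (v ^ n)" by (rule norm_mult_ineq)
    also have "\<dots> \<le> norm (x ^ n) * norm v ^ n" by (intro mult_left_mono norm_power_ineq) auto
    finally show ?thesis by (simp add: mult.commute)
  qed
  have "(\<lambda>n. norm v ^ n * norm (x ^ n)) \<longlonglongrightarrow> 0" using assms unfolding nq_def by simp
  hence "eventually (\<lambda>n. norm v ^ n * norm (x ^ n) < 1) sequentially"
    using order_tendstoD(2) by fastforce
  then obtain N where "\<And>n. n \<ge> N \<Longrightarrow> norm v ^ n * norm (x ^ n) < 1"
    unfolding eventually_sequentially by blast
  thus False using ge[of N] by fastforce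
qed

lemma qnil_iff_nq: "qnil (x::'a::cbanach_algebra_1) \<longleftrightarrow> nq x"
proof
  assume "qnil x"
  hence "qn x" unfolding qnil_def cspectrum_def qn_def by auto
  thus "nq x" by (rule qn_nq)
next
  assume a: "nq x"
  have q: "qn x" using nq_qn[OF a] .
  have ni: "\<not> ring_invertible x" using nq_not_inv[OF a] .
  show "qnil x" unfolding qnil_def cspectrum_def
  proof (intro set_eqI iffI)
    fix z assume "z \<in> {z. \<not> ring_invertible (x - cscale z 1)}"
    thus "z \<in> {0}" using q unfolding qn_def by auto
  next
    fix z :: complex assume "z \<in> {0}"
    thus "z \<in> {z. \<not> ring_invertible (x - cscale z 1)}" using ni by simp
  qed
qed

lemma qnil_iff_qn: "qnil (x::'a::cbanach_algebra_1) \<longleftrightarrow> qn x"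
  using qnil_iff_nq qn_nq nq_qn by blast

lemma comm_pow: "a * b = b * (a::'a::ring_1) \<Longrightarrow> a * b ^ n = b ^ n * a"
proof (induct n)
  case (Suc n)
  have "a * b ^ Suc n = (a * b) * b ^ n" by (simp add: mult.assoc)
  also have "\<dots> = b * (a * b ^ n)" using Suc by (simp add: mult.assoc)
  also have "\<dots> = b * (b ^ n * a)" using Suc by simp
  also have "\<dots> = b ^ Suc n * a" by (simp add: mult.assoc)
  finally show ?case .
qed simp

lemma comm_pow2: "a * b = b * (a::'a::ring_1) \<Longrightarrow> a ^ m * b ^ n = b ^ n * a ^ m"
  by (metis comm_pow)

lemma pow_mult_comm: "a * b = b * (a::'a::ring_1) \<Longrightarrow> (a * b) ^ n = a ^ n * b ^ n"
proof (induct n)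
  case (Suc n)
  have "(a * b) ^ Suc n = a * b * (a ^ n * b ^ n)" using Suc by simp
  also have "\<dots> = a * (b * a ^ n) * b ^ n" by (simp add: mult.assoc)
  also have "\<dots> = a * (a ^ n * b) * b ^ n" using comm_pow[of b a n] Suc(2) by simp
  also have "\<dots> = a ^ Suc n * b ^ Suc n" by (simp add: mult.assoc)
  finally show ?case .
qed simp

lemma nq_mult:
  fixes x z :: "'a::cbanach_algebra_1"
  assumes "nq x" "x * z = z * x"
  shows "nq (x * z)"
  unfolding nq_def
proof (intro allI impI)
  fix \<rho> :: real assume \<rho>: "\<rho> \<ge> 0"
  have L: "(\<lambda>n. (\<rho> * norm z) ^ n * norm (x ^ n)) \<longlonglongrightarrow> 0" using assms(1) \<rho> unfolding nq_def by simp
  show "(\<lambda>n. \<rho> ^ n * norm ((x * z) ^ n)) \<longlonglongrightarrow> 0"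
  proof (rule Lim_null_comparison[OF _ L], intro always_eventually allI)
    fix n
    have "norm ((x * z) ^ n) \<le> norm (x ^ n) * norm z ^ n"
      unfolding pow_mult_comm[OF assms(2)]
      by (rule order_trans[OF norm_mult_ineq]) (intro mult_left_mono norm_power_ineq; simp)
    hence "\<rho> ^ n * norm ((x * z) ^ n) \<le> \<rho> ^ n * (norm (x ^ n) * norm z ^ n)"
      using \<rho> by (intro mult_left_mono) auto
    thus "norm (\<rho> ^ n * norm ((x * z) ^ n)) \<le> (\<rho> * norm z) ^ n * norm (x ^ n)"
      using \<rho> by (simp add: power_mult_distrib ac_simps)
  qed
qed

lemma nq_mult2:
  fixes x z :: "'a::cbanach_algebra_1"
  assumes "nq x" "x * z = z * x"
  shows "nq (z * x)"
  using nq_mult[OF assms] assms(2) by simp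

lemma orth_pow: "u * v = 0 \<Longrightarrow> v * u = 0 \<Longrightarrow> (u + v) ^ Suc n = u ^ Suc n + v ^ Suc (n::nat)" for u v :: "'a::ring_1"
proof (induct n)
  case (Suc n)
  have "(u + v) ^ Suc (Suc n) = (u + v) * (u ^ Suc n + v ^ Suc n)" using Suc by simp
  also have "\<dots> = (u * u ^ Suc n + u * v ^ Suc n) + (v * u ^ Suc n + v * v ^ Suc n)"
    by (simp only: distrib_left distrib_right add_ac)
  also have "u * v ^ Suc n = (u * v) * v ^ n" by (simp only: power_Suc mult.assoc)
  also have "v * u ^ Suc n = (v * u) * u ^ n" by (simp only: power_Suc mult.assoc)
  also have "u * u ^ Suc n + (u * v) * v ^ n + ((v * u) * u ^ n + v * v ^ Suc n) = u ^ Suc (Suc n) + v ^ Suc (Suc n)"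
    using Suc(2,3) by simp
  finally show ?case .
qed simp

lemma nq_orth_sum:
  fixes u v :: "'a::cbanach_algebra_1"
  assumes "nq u" "nq v" "u * v = 0" "v * u = 0"
  shows "nq (u + v)"
  unfolding nq_def
proof (intro allI impI)
  fix \<rho> :: real assume \<rho>: "\<rho> \<ge> 0"
  have L: "(\<lambda>n. \<rho> ^ n * norm (u ^ n) + \<rho> ^ n * norm (v ^ n)) \<longlonglongrightarrow> 0"
  proof -
    have a: "(\<lambda>n. \<rho> ^ n * norm (u ^ n)) \<longlonglongrightarrow> 0" using assms(1) \<rho> unfolding nq_def by blast
    have b: "(\<lambda>n. \<rho> ^ n * norm (v ^ n)) \<longlonglongrightarrow> 0" using assms(2) \<rho> unfolding nq_def by blast
    show ?thesis using tendsto_add[OF a b] by simp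
  qed
  show "(\<lambda>n. \<rho> ^ n * norm ((u + v) ^ n)) \<longlonglongrightarrow> 0"
  proof (rule Lim_null_comparison[OF _ L])
    show "eventually (\<lambda>n. norm (\<rho> ^ n * norm ((u + v) ^ n)) \<le> \<rho> ^ n * norm (u ^ n) + \<rho> ^ n * norm (v ^ n)) sequentially"
      using eventually_ge_at_top[of 1]
    proof eventually_elim
      case (elim n)
      then obtain m where m: "n = Suc m" by (cases n) auto
      have "norm ((u + v) ^ n) \<le> norm (u ^ n) + norm (v ^ n)"
        unfolding m orth_pow[OF assms(3,4)] by (rule norm_triangle_ineq)
      hence "\<rho> ^ n * norm ((u + v) ^ n) \<le> \<rho> ^ n * (norm (u ^ n) + norm (v ^ n))"
        using \<rho> by (intro mult_left_mono) auto
      thus ?case using \<rho> by (simp add: distrib_left)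
    qed
  qed
qed

lemma qn_root:
  fixes z :: "'a::calg_1"
  assumes "qn (z ^ m)" "m \<ge> 1"
  shows "qn z"
proof (rule allinv_qn)
  fix \<mu>
  define y where "y = cscale \<mu> z"
  have "ring_invertible (1 - cscale (\<mu> ^ m) (z ^ m))" by (rule qn_allinv[OF assms(1)])
  hence i: "ring_invertible (1 - y ^ m)" unfolding y_def cscale_power .
  have g: "(1 - y) * (\<Sum>j<m. y ^ j) = 1 - y ^ m" "(\<Sum>j<m. y ^ j) * (1 - y) = 1 - y ^ m"
    using geom_ring[of y m] by auto
  have "ring_invertible ((1 - y) * (\<Sum>j<m. y ^ j))" using i g by simp
  thus "ring_invertible (1 - cscale \<mu> z)" unfolding y_def[symmetric]
    by (rule inv_factor_comm) (use g in simp)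
qed

lemma nq_root:
  fixes z :: "'a::cbanach_algebra_1"
  assumes "nq (z ^ m)" "m \<ge> 1"
  shows "nq z"
  using qn_root[of z m] assms nq_qn qn_nq by blast

lemma nq_inv1:
  fixes t :: "'a::cbanach_algebra_1"
  assumes "nq t" shows "ring_invertible (1 - t)"
proof -
  have "ring_invertible (t - cscale 1 1)" using nq_qn[OF assms] unfolding qn_def by simp
  hence "ring_invertible (- (1 - t))" by (simp add: cscale_one)
  thus ?thesis by (simp only: inv_uminus)
qed


definition bicomm :: "'a::ring_1 set \<Rightarrow> 'a set" where
  "bicomm S = {y. \<forall>z. (\<forall>s\<in>S. z * s = s * z) \<longrightarrow> y * z = z * y}"

lemma bicomm_base: "s \<in> S \<Longrightarrow> s \<in> bicomm S"
  unfolding bicomm_def by auto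

lemma bicomm_one: "1 \<in> bicomm S" and bicomm_zero: "0 \<in> bicomm S"
  unfolding bicomm_def by auto

lemma bicomm_mult: "y \<in> bicomm S \<Longrightarrow> z \<in> bicomm S \<Longrightarrow> y * z \<in> bicomm S"
  unfolding bicomm_def by (auto simp: mult.assoc) (metis mult.assoc)

lemma bicomm_add: "y \<in> bicomm S \<Longrightarrow> z \<in> bicomm S \<Longrightarrow> y + z \<in> bicomm S"
  unfolding bicomm_def by (auto simp: distrib_left distrib_right)

lemma bicomm_diff: "y \<in> bicomm S \<Longrightarrow> z \<in> bicomm S \<Longrightarrow> y - z \<in> bicomm S"
  unfolding bicomm_def by (auto simp: left_diff_distrib right_diff_distrib)

lemma bicomm_pow: "y \<in> bicomm S \<Longrightarrow> y ^ n \<in> bicomm S"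
  by (induct n) (auto intro: bicomm_mult bicomm_one)

lemma bicomm_scaleR: "y \<in> bicomm S \<Longrightarrow> scaleR c (y::'a::real_normed_algebra_1) \<in> bicomm S"
  unfolding bicomm_def by auto

lemma bicomm_rinv: "y \<in> bicomm S \<Longrightarrow> ring_invertible y \<Longrightarrow> rinv y \<in> bicomm S"
  unfolding bicomm_def using rinv_commute by blast

lemma bicomm_suminf:
  fixes f :: "nat \<Rightarrow> 'a::{real_normed_algebra_1,banach}"
  assumes "summable f" "\<And>n. f n \<in> bicomm S"
  shows "suminf f \<in> bicomm S"
  unfolding bicomm_def
proof (intro CollectI allI impI)
  fix z assume z: "\<forall>s\<in>S. z * s = s * z"
  have "suminf f * z = (\<Sum>n. f n * z)" by (rule suminf_mult2[OF assms(1)])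
  also have "\<dots> = (\<Sum>n. z * f n)" using assms(2) z unfolding bicomm_def by auto
  also have "\<dots> = z * suminf f" by (rule suminf_mult[OF assms(1)])
  finally show "suminf f * z = z * suminf f" .
qed

lemma bicomm_comm:
  assumes "\<And>s s'. s \<in> S \<Longrightarrow> s' \<in> S \<Longrightarrow> s * s' = s' * s"
    and "y \<in> bicomm S" "z \<in> bicomm S"
  shows "y * z = z * y"
proof -
  have "\<forall>s\<in>S. z * s = s * z"
  proof
    fix s assume s: "s \<in> S"
    have "\<forall>s'\<in>S. s * s' = s' * s" using assms(1) s by auto
    thus "z * s = s * z" using assms(3) unfolding bicomm_def by auto
  qed
  thus ?thesis using assms(2) unfolding bicomm_def by auto
qed

lemma bicomm_single_comm: "y \<in> bicomm {a} \<Longrightarrow> z \<in> bicomm {a} \<Longrightarrow> y * z = z * y"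
  by (rule bicomm_comm) auto


section \<open>g-pi-Hirano invertibility: forward direction of the characterisation\<close>

lemma char_fwd:
  fixes a :: "'a::cbanach_algebra_1"
  assumes "gpi_hirano a"
  shows "\<exists>n>0. nq (a - a ^ (n + 1))"
proof -
  obtain x n where x: "x * a * x = x" "a * x = x * a" and n: "n > 0"
    and q: "qnil (a - a ^ (n + 2) * x)"
    using assms unfolding gpi_hirano_def by blast
  define S where "S = {a, x}"
  have pc: "s * s' = s' * s" if "s \<in> S" "s' \<in> S" for s s'
    using that x(2) unfolding S_def by auto
  have aS: "a \<in> bicomm S" and xS: "x \<in> bicomm S" unfolding S_def by (auto intro: bicomm_base)
  define e where "e = a * x"
  define r where "r = a - a ^ (n + 2) * x"
  have eS: "e \<in> bicomm S" unfolding e_def using aS xS by (rule bicomm_mult)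
  have rS: "r \<in> bicomm S" unfolding r_def using aS xS
    by (intro bicomm_diff bicomm_mult bicomm_pow)
  have ee: "e * e = e"
  proof -
    have "a * x * (a * x) = a * (x * a * x)" by (simp add: mult.assoc)
    thus ?thesis unfolding e_def using x(1) by simp
  qed
  have re: "a ^ (n + 2) * x = a ^ (n + 1) * e"
  proof -
    have "a ^ Suc (n + 1) = a ^ (n + 1) * a" by (rule power_Suc2)
    moreover have "Suc (n + 1) = n + 2" by simp
    ultimately have "a ^ (n + 2) = a ^ (n + 1) * a" by simp
    thus ?thesis unfolding e_def by (simp add: mult.assoc)
  qed
  have e1e: "e * (1 - e) = 0" using ee by (simp add: right_diff_distrib)
  have r1e: "r * (1 - e) = a * (1 - e)"
  proof -
    have "r * (1 - e) = a * (1 - e) - a ^ (n + 1) * (e * (1 - e))"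
      unfolding r_def re by (simp add: left_diff_distrib mult.assoc)
    thus ?thesis using e1e by simp
  qed
  define w where "w = 1 - a ^ n * (1 - e)"
  have wS: "w \<in> bicomm S" unfolding w_def using aS eS
    by (intro bicomm_diff bicomm_mult bicomm_pow bicomm_one)
  have anS: "a ^ n \<in> bicomm S" by (rule bicomm_pow[OF aS])
  have ran: "r * a ^ n = a ^ n * r" by (rule bicomm_comm[OF pc rS anS])
  have key: "a - a ^ (n + 1) = r * w"
  proof -
    have "r * w = r - (r * a ^ n) * (1 - e)" unfolding w_def by (simp add: right_diff_distrib mult.assoc)
    also have "\<dots> = r - a ^ n * (r * (1 - e))" unfolding ran by (simp add: mult.assoc)
    also have "\<dots> = r - a ^ n * (a * (1 - e))" unfolding r1e ..
    also have "\<dots> = r - (a ^ n * a) * (1 - e)" by (simp only: mult.assoc)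
    also have "\<dots> = r - (a ^ (n + 1) - a ^ (n + 1) * e)"
      unfolding power_Suc2[of a n, unfolded Suc_eq_plus1, symmetric] by (simp only: right_diff_distrib mult_1_right)
    also have "\<dots> = a - a ^ (n + 1)" unfolding r_def re by simp
    finally show ?thesis by simp
  qed
  have nr: "nq r" using q qnil_iff_nq unfolding r_def by blast
  have "r * w = w * r" by (rule bicomm_comm[OF pc rS wS])
  hence "nq (r * w)" using nq_mult[OF nr] by blast
  thus ?thesis using n key by auto
qed


section \<open>Lifting almost idempotents\<close>

lemma scaleR_power': "(scaleR c y) ^ k = scaleR (c ^ k) (y ^ k :: 'a::real_normed_algebra_1)"
  by (induct k) simp_all

lemma gch_bound: "\<bar>(-1/2::real) gchoose k\<bar> \<le> 1"
proof (induct k)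
  case 0 thus ?case by simp
next
  case (Suc k)
  define G where "G = (-1/2::real) gchoose k"
  define G' where "G' = (-1/2::real) gchoose (Suc k)"
  have m: "(-1/2::real) * G = of_nat k * G + of_nat (Suc k) * G'"
    unfolding G_def G'_def by (rule gbinomial_mult_1)
  hence h: "of_nat (Suc k) * G' = (-1/2 - of_nat k) * G"
    by (simp add: algebra_simps)
  have "\<bar>of_nat (Suc k) * G'\<bar> = \<bar>(-1/2 - of_nat k) * G\<bar>" using arg_cong[OF h, of abs] .
  moreover have "\<bar>of_nat (Suc k) * G'\<bar> = real (Suc k) * \<bar>G'\<bar>" by (simp add: abs_mult)
  moreover have "\<bar>(-1/2 - of_nat k) * G\<bar> = (1/2 + real k) * \<bar>G\<bar>"
  proof -
    have "\<bar>-1/2 - real k\<bar> = 1/2 + real k" by arith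
    thus ?thesis by (simp only: abs_mult of_nat_id)
  qed
  ultimately have e: "real (Suc k) * \<bar>G'\<bar> = (1/2 + real k) * \<bar>G\<bar>" by simp
  also have "\<dots> \<le> (1/2 + real k) * 1" using Suc unfolding G_def by (intro mult_left_mono) auto
  also have "\<dots> \<le> real (Suc k) * 1" by simp
  finally have "real (Suc k) * \<bar>G'\<bar> \<le> real (Suc k) * 1" .
  hence "\<bar>G'\<bar> \<le> 1" by (rule mult_left_le_imp_le) simp
  thus ?case unfolding G'_def .
qed

lemma gch_m1: "((-1::real) gchoose m) = (-1) ^ m"
proof -
  have "((- 1::real) gchoose m) = (-1) ^ m * ((1 + of_nat m - 1) gchoose m)" by (rule gbinomial_minus)
  also have "((1::real) + of_nat m - 1) gchoose m = 1"
    using binomial_gbinomial[of m m, where 'a=real] by simp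
  finally show ?thesis by simp
qed


lemma lift:
  fixes f r :: "'a::cbanach_algebra_1"
  assumes nr: "nq r" and rf: "r = f - f * f" and fS: "f \<in> bicomm {a}"
  shows "\<exists>e k0. e \<in> bicomm {a} \<and> e * e = e \<and> k0 \<in> bicomm {a} \<and> e - f = r * k0"
proof -
  have rS: "r \<in> bicomm {a}" unfolding rf using fS by (intro bicomm_diff bicomm_mult)
  define t where "t = scaleR (-4) r"
  have tS: "t \<in> bicomm {a}" unfolding t_def using rS by (rule bicomm_scaleR)
  have nt: "norm (t ^ k) = 4 ^ k * norm (r ^ k)" for k
    unfolding t_def scaleR_power' by (simp add: power_abs)
  have "(\<lambda>k. 8 ^ k * norm (r ^ k)) \<longlonglongrightarrow> 0" using nr unfolding nq_def by simp
  hence ev: "eventually (\<lambda>k. 8 ^ k * norm (r ^ k) < 1) sequentially"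
    using order_tendstoD(2) by fastforce
  have sumb: "summable (\<lambda>k. norm (scaleR (dd k) (t ^ k)))" if db: "\<And>k. \<bar>dd k\<bar> \<le> 1" for dd :: "nat \<Rightarrow> real"
  proof (rule summable_comparison_test_ev)
    show "summable (\<lambda>k. (1/2::real) ^ k)" by (rule summable_geometric) simp
    show "eventually (\<lambda>k. norm (norm (scaleR (dd k) (t ^ k))) \<le> (1/2) ^ k) sequentially"
      using ev
    proof eventually_elim
      case (elim k)
      have "norm (norm (scaleR (dd k) (t ^ k))) = \<bar>dd k\<bar> * (4 ^ k * norm (r ^ k))" by (simp add: nt)
      also have "\<dots> \<le> 1 * (4 ^ k * norm (r ^ k))" using db[of k] by (intro mult_right_mono) auto
      also have "\<dots> = (1/2) ^ k * (8 ^ k * norm (r ^ k))"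
      proof -
        have "(1/2::real) ^ k * 8 ^ k = 4 ^ k" by (simp add: power_mult_distrib[symmetric])
        thus ?thesis by (simp add: mult.assoc[symmetric])
      qed
      also have "\<dots> \<le> (1/2) ^ k * 1" using elim by (intro mult_left_mono) auto
      finally show ?case by simp
    qed
  qed
  define c where "c k = (-1/2::real) gchoose k" for k
  have cb: "\<bar>c k\<bar> \<le> 1" for k unfolding c_def by (rule gch_bound)
  define w where "w = (\<Sum>k. scaleR (c k) (t ^ k))"
  have sw: "summable (\<lambda>k. norm (scaleR (c k) (t ^ k)))" by (rule sumb[OF cb])
  have wS: "w \<in> bicomm {a}" unfolding w_def
    by (rule bicomm_suminf[OF summable_norm_cancel[OF sw]]) (intro bicomm_scaleR bicomm_pow tS)
  have mt: "(- t) ^ m = scaleR ((-1) ^ m) (t ^ m)" for m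
  proof -
    have "- t = scaleR (-1) t" by simp
    thus ?thesis by (simp only: scaleR_power')
  qed
  have prodterm: "(\<Sum>i\<le>m. scaleR (c i) (t ^ i) * scaleR (c (m - i)) (t ^ (m - i))) = (- t) ^ m" for m
  proof -
    have "(\<Sum>i\<le>m. scaleR (c i) (t ^ i) * scaleR (c (m - i)) (t ^ (m - i))) = (\<Sum>i\<le>m. scaleR (c i * c (m - i)) (t ^ m))"
    proof (rule sum.cong[OF refl])
      fix i assume "i \<in> {..m}"
      hence "t ^ i * t ^ (m - i) = t ^ m" by (simp add: power_add[symmetric])
      thus "scaleR (c i) (t ^ i) * scaleR (c (m - i)) (t ^ (m - i)) = scaleR (c i * c (m - i)) (t ^ m)" by simp
    qed
    also have "\<dots> = scaleR (\<Sum>i\<le>m. c i * c (m - i)) (t ^ m)" by (simp add: scaleR_sum_left)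
    also have "(\<Sum>i\<le>m. c i * c (m - i)) = (-1) ^ m"
    proof -
      have "(\<Sum>i\<le>m. c i * c (m - i)) = sum (\<lambda>k. ((-1/2::real) gchoose k) * ((-1/2) gchoose (m - k))) {0..m}"
        unfolding c_def by (simp add: atLeast0AtMost)
      also have "\<dots> = ((-1/2) + (-1/2) :: real) gchoose m" by (rule gbinomial_Vandermonde)
      also have "\<dots> = (-1) ^ m" using gch_m1 by simp
      finally show ?thesis .
    qed
    finally show ?thesis unfolding mt .
  qed
  have cp: "(\<lambda>m. (- t) ^ m) sums (w * w)"
    using Cauchy_product_sums[OF sw sw] unfolding prodterm w_def .
  have snt: "summable (\<lambda>m. norm ((- t) ^ m))"
    unfolding mt by (rule sumb) (simp add: power_abs)
  have N: "(1 - (- t)) * (\<Sum>m. (- t) ^ m) = 1" "(\<Sum>m. (- t) ^ m) * (1 - (- t)) = 1"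
    using neumann[OF snt] by auto
  have ww: "(\<Sum>m. (- t) ^ m) = w * w" using cp by (rule sums_unique[symmetric])
  have W1: "(1 + t) * (w * w) = 1" using N(1) unfolding ww by simp
  define d where "d = scaleR 2 f - 1"
  have dS: "d \<in> bicomm {a}" unfolding d_def using fS by (intro bicomm_diff bicomm_scaleR bicomm_one)
  have s4: "scaleR 4 y = y + y + y + y" for y :: 'a
  proof -
    have "scaleR 4 y = scaleR (2 + 2) y" by simp
    also have "\<dots> = (y + y) + (y + y)" by (simp only: scaleR_add_left scaleR_2)
    finally show ?thesis by (simp add: add.assoc)
  qed
  have dd: "d * d = 1 + t"
    unfolding d_def t_def rf by (simp add: algebra_simps scaleR_2 s4)
  have dw: "d * w = w * d" by (rule bicomm_single_comm[OF dS wS])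
  have dwdw: "(d * w) * (d * w) = 1"
  proof -
    have "(d * w) * (d * w) = d * (w * d) * w" by (simp add: mult.assoc)
    also have "\<dots> = (d * d) * (w * w)" unfolding dw[symmetric] by (simp add: mult.assoc)
    also have "\<dots> = 1" unfolding dd by (rule W1)
    finally show ?thesis .
  qed
  define e where "e = scaleR (1/2) (1 + d * w)"
  have eS: "e \<in> bicomm {a}" unfolding e_def using dS wS by (intro bicomm_scaleR bicomm_add bicomm_one bicomm_mult)
  have ee: "e * e = e"
  proof -
    have sq: "(1 + d * w) * (1 + d * w) = (1 + d * w) + (1 + d * w)"
    proof -
      have "(1 + d * w) * (1 + d * w) = 1 + d * w + d * w + (d * w) * (d * w)"
        by (simp add: distrib_left distrib_right add_ac)
      thus ?thesis unfolding dwdw by (simp add: add_ac)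
    qed
    have "e * e = scaleR (1/4) ((1 + d * w) * (1 + d * w))" unfolding e_def by simp
    also have "\<dots> = scaleR (1/4) (scaleR 2 (1 + d * w))" unfolding sq scaleR_2 ..
    also have "\<dots> = e" unfolding e_def by simp
    finally show ?thesis .
  qed
  define w' where "w' = (\<Sum>k. scaleR (c (Suc k)) (t ^ k))"
  have sw': "summable (\<lambda>k. norm (scaleR (c (Suc k)) (t ^ k)))" by (rule sumb) (rule cb)
  have w'S: "w' \<in> bicomm {a}" unfolding w'_def
    by (rule bicomm_suminf[OF summable_norm_cancel[OF sw']]) (intro bicomm_scaleR bicomm_pow tS)
  have w1: "w - 1 = t * w'"
  proof -
    have "(\<Sum>k. scaleR (c (Suc k)) (t ^ Suc k)) = w - scaleR (c 0) (t ^ 0)"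
      unfolding w_def by (rule suminf_split_head[OF summable_norm_cancel[OF sw]])
    also have "\<dots> = w - 1" by (simp add: c_def)
    finally have A: "(\<Sum>k. scaleR (c (Suc k)) (t ^ Suc k)) = w - 1" .
    have "(\<Sum>k. scaleR (c (Suc k)) (t ^ Suc k)) = (\<Sum>k. t * scaleR (c (Suc k)) (t ^ k))" by simp
    also have "\<dots> = t * w'" unfolding w'_def by (rule suminf_mult[OF summable_norm_cancel[OF sw']])
    finally show ?thesis using A by simp
  qed
  have dr: "d * r = r * d" by (rule bicomm_single_comm[OF dS rS])
  have ef: "e - f = r * scaleR (-2) (d * w')"
  proof -
    have "e - f = scaleR (1/2) (d * w - d)" unfolding e_def d_def by (simp add: algebra_simps)
    also have "d * w - d = d * (w - 1)" by (simp add: right_diff_distrib)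
    also have "\<dots> = scaleR (-4) ((d * r) * w')" unfolding w1 t_def by (simp add: mult.assoc)
    also have "\<dots> = scaleR (-4) (r * (d * w'))" unfolding dr by (simp add: mult.assoc)
    finally show ?thesis by simp
  qed
  have k0S: "scaleR (-2) (d * w') \<in> bicomm {a}" using dS w'S by (intro bicomm_scaleR bicomm_mult)
  show ?thesis using eS ee k0S ef by blast
qed


lemma idem_pow: "p * p = p \<Longrightarrow> p ^ Suc k = (p::'a::ring_1)"
  by (induct k) (simp_all add: mult.assoc[symmetric])

lemma char_bwd:
  fixes a :: "'a::cbanach_algebra_1"
  assumes n: "n > 0" and ns: "nq (a - a ^ (n + 1))"
  shows "gpi_hirano a"
proof -
  obtain m where m: "n = Suc m" using n by (cases n) auto
  define s where "s = a - a ^ (n + 1)"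
  have aS: "a \<in> bicomm {a}" by (rule bicomm_base) simp
  have sS: "s \<in> bicomm {a}" unfolding s_def using aS by (intro bicomm_diff bicomm_pow)
  have nsq: "nq s" using ns unfolding s_def .
  define f where "f = a ^ n"
  have fS: "f \<in> bicomm {a}" unfolding f_def using aS by (rule bicomm_pow)
  define r where "r = f - f * f"
  have amS: "a ^ m \<in> bicomm {a}" using aS by (rule bicomm_pow)
  have rs: "r = s * a ^ m"
  proof -
    have "s * a ^ m = a * a ^ m - a ^ (n + 1) * a ^ m" unfolding s_def by (simp add: left_diff_distrib)
    also have "a * a ^ m = f" unfolding f_def m by simp
    also have "a ^ (n + 1) * a ^ m = f * f"
    proof -
      have "a ^ (n + 1) * a ^ m = a ^ (n + 1 + m)" by (simp only: power_add)
      also have "n + 1 + m = n + n" using m by simp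
      also have "a ^ (n + n) = f * f" unfolding f_def by (simp only: power_add)
      finally show ?thesis .
    qed
    finally show ?thesis unfolding r_def by simp
  qed
  have nr: "nq r" unfolding rs by (rule nq_mult[OF nsq bicomm_single_comm[OF sS amS]])
  obtain e k0 where eS: "e \<in> bicomm {a}" and ee: "e * e = e" and k0S: "k0 \<in> bicomm {a}"
    and ef: "e - f = r * k0"
    using lift[OF nr r_def fS] by blast
  have rS: "r \<in> bicomm {a}" unfolding r_def using fS by (intro bicomm_diff bicomm_mult)
  have nef: "nq (e - f)" unfolding ef by (rule nq_mult[OF nr bicomm_single_comm[OF rS k0S]])
  have efS: "e - f \<in> bicomm {a}" using eS fS by (rule bicomm_diff)
  define t' where "t' = e * (e - f)"
  have nt': "nq t'" unfolding t'_def by (rule nq_mult2[OF nef bicomm_single_comm[OF efS eS]])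
  have t'S: "t' \<in> bicomm {a}" unfolding t'_def using eS efS by (rule bicomm_mult)
  have it: "ring_invertible (1 - t')" by (rule nq_inv1[OF nt'])
  define v where "v = rinv (1 - t')"
  have v: "(1 - t') * v = 1" "v * (1 - t') = 1" unfolding v_def using rinv[OF it] by auto
  have vS: "v \<in> bicomm {a}" unfolding v_def using t'S it by (intro bicomm_rinv bicomm_diff bicomm_one)
  define x where "x = a ^ m * (e * v)"
  have xS: "x \<in> bicomm {a}" unfolding x_def using amS eS vS by (intro bicomm_mult)
  have fe: "f * e = e * f" by (rule bicomm_single_comm[OF fS eS])
  have et': "e * t' = t'" unfolding t'_def by (simp add: mult.assoc[symmetric] ee)
  have fe2: "f * e = e * (1 - t')"
  proof -
    have "e * (1 - t') = e - t'" using et' by (simp add: right_diff_distrib)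
    also have "\<dots> = e * f" unfolding t'_def using ee by (simp add: right_diff_distrib)
    finally show ?thesis using fe by simp
  qed
  have ax: "a * x = e"
  proof -
    have "a * x = (a * a ^ m) * (e * v)" unfolding x_def by (simp add: mult.assoc)
    also have "a * a ^ m = f" unfolding f_def m by simp
    also have "f * (e * v) = (f * e) * v" by (simp add: mult.assoc)
    also have "\<dots> = e * ((1 - t') * v)" unfolding fe2 by (simp add: mult.assoc)
    also have "\<dots> = e" using v by simp
    finally show ?thesis .
  qed
  have xa: "a * x = x * a" by (rule bicomm_single_comm[OF aS xS])
  have eam: "e * a ^ m = a ^ m * e" by (rule bicomm_single_comm[OF eS amS])
  have xax: "x * a * x = x"
  proof -
    have "x * a * x = (a * x) * x" unfolding xa ..
    also have "\<dots> = e * x" unfolding ax ..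
    also have "\<dots> = (e * a ^ m) * (e * v)" unfolding x_def by (simp add: mult.assoc)
    also have "\<dots> = a ^ m * ((e * e) * v)" unfolding eam by (simp add: mult.assoc)
    also have "\<dots> = x" unfolding ee x_def ..
    finally show ?thesis .
  qed
  define u where "u = a * (1 - e)"
  define v2 where "v2 = s * e"
  have 1: "a ^ (n + 2) * x = a ^ (n + 1) * e"
  proof -
    have "a ^ (n + 2) = a ^ (n + 1) * a"
    proof -
      have "a ^ Suc (n + 1) = a ^ (n + 1) * a" by (rule power_Suc2)
      thus ?thesis by simp
    qed
    thus ?thesis using ax by (simp add: mult.assoc)
  qed
  have decomp: "a - a ^ (n + 2) * x = u + v2"
    unfolding 1 u_def v2_def s_def by (simp add: algebra_simps)
  have nv2: "nq v2" unfolding v2_def by (rule nq_mult[OF nsq bicomm_single_comm[OF sS eS]])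
  have e1S: "1 - e \<in> bicomm {a}" using eS by (intro bicomm_diff bicomm_one)
  have ee1: "(1 - e) * (1 - e) = 1 - e" using ee by (simp add: algebra_simps)
  have un: "u ^ n = f * (1 - e)"
    unfolding u_def f_def pow_mult_comm[OF bicomm_single_comm[OF aS e1S]] m idem_pow[OF ee1] ..
  have f1e: "f * (1 - e) = (e - 1) * (e - f)"
  proof -
    have "(e - 1) * (e - f) = e * e - e * f - e + f" by (simp add: algebra_simps)
    also have "\<dots> = f - f * e" using ee fe by simp
    finally show ?thesis by (simp add: right_diff_distrib)
  qed
  have e1S': "e - 1 \<in> bicomm {a}" using eS by (intro bicomm_diff bicomm_one)
  have "nq ((e - 1) * (e - f))" by (rule nq_mult2[OF nef bicomm_single_comm[OF efS e1S']])
  hence "nq (u ^ n)" unfolding un f1e .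
  hence nu: "nq u" by (rule nq_root) (use n in simp)
  have es: "e * s = s * e" by (rule bicomm_single_comm[OF eS sS])
  have ea: "e * a = a * e" by (rule bicomm_single_comm[OF eS aS])
  have e1e: "(1 - e) * e = 0" using ee by (simp add: left_diff_distrib)
  have e1e': "e * (1 - e) = 0" using ee by (simp add: right_diff_distrib)
  have o1: "u * v2 = 0"
  proof -
    have "u * v2 = a * ((1 - e) * s) * e" unfolding u_def v2_def by (simp add: mult.assoc)
    also have "(1 - e) * s = s * (1 - e)" using es by (simp add: left_diff_distrib right_diff_distrib)
    also have "a * (s * (1 - e)) * e = a * s * ((1 - e) * e)" by (simp add: mult.assoc)
    finally show ?thesis using e1e by simp
  qed
  have o2: "v2 * u = 0"
  proof -
    have "v2 * u = s * (e * a) * (1 - e)" unfolding u_def v2_def by (simp add: mult.assoc)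
    also have "\<dots> = s * a * (e * (1 - e))" unfolding ea by (simp add: mult.assoc)
    finally show ?thesis using e1e' by simp
  qed
  have "nq (a - a ^ (n + 2) * x)" unfolding decomp by (rule nq_orth_sum[OF nu nv2 o1 o2])
  hence "qnil (a - a ^ (n + 2) * x)" using qnil_iff_nq by blast
  thus ?thesis unfolding gpi_hirano_def using xax xa n by blast
qed

lemma char_gpi: "gpi_hirano (a::'a::cbanach_algebra_1) \<longleftrightarrow> (\<exists>n>0. nq (a - a ^ (n + 1)))"
  using char_fwd char_bwd by blast





section \<open>Normed structure on 2x2 matrices\<close>

fun m11 :: "'a m2 \<Rightarrow> 'a" where "m11 (M2 a b c d) = a"
fun m12 :: "'a m2 \<Rightarrow> 'a" where "m12 (M2 a b c d) = b"
fun m21 :: "'a m2 \<Rightarrow> 'a" where "m21 (M2 a b c d) = c"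
fun m22 :: "'a m2 \<Rightarrow> 'a" where "m22 (M2 a b c d) = d"

lemma col_bound:
  fixes A B C D E G N M :: real
  assumes "0 \<le> A" "0 \<le> B" "0 \<le> C" "0 \<le> D" "0 \<le> E" "0 \<le> G"
    and "A + C \<le> N" "B + D \<le> N" "E + G \<le> M"
  shows "A * E + B * G + (C * E + D * G) \<le> N * M"
proof -
  have "A * E + B * G + (C * E + D * G) = (A + C) * E + (B + D) * G" by (simp add: algebra_simps)
  also have "\<dots> \<le> N * E + N * G" using assms by (intro add_mono mult_right_mono) auto
  also have "\<dots> = N * (E + G)" by (simp add: algebra_simps)
  also have "\<dots> \<le> N * M" using assms by (intro mult_left_mono) auto
  finally show ?thesis .
qed

lemma max_le_add: "p1 \<le> q1 + r1 \<Longrightarrow> p2 \<le> q2 + r2 \<Longrightarrow> max p1 p2 \<le> max q1 q2 + max r1 (r2::real)"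
  by (auto simp: max_def)

instantiation m2 :: (cbanach_algebra_1) real_normed_algebra_1
begin

fun scaleR_m2 :: "real \<Rightarrow> 'a m2 \<Rightarrow> 'a m2" where
  "scaleR_m2 r (M2 a b c d) = M2 (scaleR r a) (scaleR r b) (scaleR r c) (scaleR r d)"

fun norm_m2 :: "'a m2 \<Rightarrow> real" where
  "norm_m2 (M2 a b c d) = max (norm a + norm c) (norm b + norm d)"

definition sgn_m2 :: "'a m2 \<Rightarrow> 'a m2" where
  "sgn_m2 x = scaleR (inverse (norm x)) x"

definition dist_m2 :: "'a m2 \<Rightarrow> 'a m2 \<Rightarrow> real" where
  "dist_m2 x y = norm (x - y)"

definition uniformity_m2 :: "('a m2 \<times> 'a m2) filter" where
  "uniformity_m2 = (INF e\<in>{0<..}. principal {(x, y). dist x y < e})"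

definition open_m2 :: "'a m2 set \<Rightarrow> bool" where
  "open_m2 U = (\<forall>x\<in>U. \<forall>\<^sub>F (x', y) in uniformity. x' = x \<longrightarrow> y \<in> U)"

instance
proof
  fix x y :: "'a m2" and r s :: real and U :: "'a m2 set"
  show "scaleR r (x + y) = scaleR r x + scaleR r y"
    by (cases x; cases y) (simp add: scaleR_add_right)
  show "scaleR (r + s) x = scaleR r x + scaleR s x"
    by (cases x) (simp add: scaleR_add_left)
  show "scaleR r (scaleR s x) = scaleR (r * s) x"
    by (cases x) simp
  show "scaleR 1 x = x"
    by (cases x) simp
  show "dist x y = norm (x - y)" by (simp add: dist_m2_def)
  show "sgn x = scaleR (inverse (norm x)) x" by (simp add: sgn_m2_def)
  show "(uniformity :: ('a m2 \<times> 'a m2) filter) = (INF e\<in>{0<..}. principal {(x, y). dist x y < e})"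
    by (simp add: uniformity_m2_def)
  show "open U = (\<forall>x\<in>U. \<forall>\<^sub>F (x', y) in uniformity. x' = x \<longrightarrow> y \<in> U)"
    by (simp add: open_m2_def)
  show "(norm x = 0) = (x = 0)"
  proof (cases x)
    case (M2 a b c d)
    have "max (norm a + norm c) (norm b + norm d) = 0 \<longleftrightarrow> (a = 0 \<and> b = 0 \<and> c = 0 \<and> d = 0)"
    proof -
      have "max (norm a + norm c) (norm b + norm d) = 0 \<longleftrightarrow> (norm a + norm c = 0 \<and> norm b + norm d = 0)"
        by (auto simp: max_def) (smt (verit) norm_ge_zero)+
      also have "\<dots> \<longleftrightarrow> (a = 0 \<and> b = 0 \<and> c = 0 \<and> d = 0)" by (auto simp: add_nonneg_eq_0_iff)
      finally show ?thesis .
    qed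
    thus ?thesis using M2 by (simp add: zero_m2_def)
  qed
  show "norm (x + y) \<le> norm x + norm y"
  proof (cases x; cases y)
    fix a b c d e f g h
    assume xy: "x = M2 a b c d" "y = M2 e f g h"
    have "norm (a + e) + norm (c + g) \<le> (norm a + norm c) + (norm e + norm g)"
      using norm_triangle_ineq[of a e] norm_triangle_ineq[of c g] by simp
    moreover have "norm (b + f) + norm (d + h) \<le> (norm b + norm d) + (norm f + norm h)"
      using norm_triangle_ineq[of b f] norm_triangle_ineq[of d h] by simp
    ultimately have "max (norm (a + e) + norm (c + g)) (norm (b + f) + norm (d + h))
        \<le> max (norm a + norm c) (norm b + norm d) + max (norm e + norm g) (norm f + norm h)"
      by (rule max_le_add)
    thus ?thesis using xy by simp
  qed
  show "norm (scaleR r x) = \<bar>r\<bar> * norm x"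
    by (cases x) (simp add: max_mult_distrib_left distrib_left)
  show "scaleR r x * y = scaleR r (x * y)"
    by (cases x; cases y) (simp add: scaleR_add_right)
  show "x * scaleR r y = scaleR r (x * y)"
    by (cases x; cases y) (simp add: scaleR_add_right)
  show "norm (x * y) \<le> norm x * norm y"
  proof (cases x; cases y)
    fix a b c d e f g h
    assume xy: "x = M2 a b c d" "y = M2 e f g h"
    define N where "N = max (norm a + norm c) (norm b + norm d)"
    define M where "M = max (norm e + norm g) (norm f + norm h)"
    have c1: "norm (a * e + b * g) + norm (c * e + d * g) \<le> N * M"
    proof -
      have "norm (a * e + b * g) \<le> norm a * norm e + norm b * norm g"
        by (rule order_trans[OF norm_triangle_ineq add_mono[OF norm_mult_ineq norm_mult_ineq]])
      moreover have "norm (c * e + d * g) \<le> norm c * norm e + norm d * norm g"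
        by (rule order_trans[OF norm_triangle_ineq add_mono[OF norm_mult_ineq norm_mult_ineq]])
      moreover have "norm a * norm e + norm b * norm g + (norm c * norm e + norm d * norm g) \<le> N * M"
        by (rule col_bound) (auto simp: N_def M_def)
      ultimately show ?thesis by linarith
    qed
    have c2: "norm (a * f + b * h) + norm (c * f + d * h) \<le> N * M"
    proof -
      have "norm (a * f + b * h) \<le> norm a * norm f + norm b * norm h"
        by (rule order_trans[OF norm_triangle_ineq add_mono[OF norm_mult_ineq norm_mult_ineq]])
      moreover have "norm (c * f + d * h) \<le> norm c * norm f + norm d * norm h"
        by (rule order_trans[OF norm_triangle_ineq add_mono[OF norm_mult_ineq norm_mult_ineq]])
      moreover have "norm a * norm f + norm b * norm h + (norm c * norm f + norm d * norm h) \<le> N * M"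
        by (rule col_bound) (auto simp: N_def M_def)
      ultimately show ?thesis by linarith
    qed
    show ?thesis using xy c1 c2 by (simp add: N_def M_def)
  qed
  show "norm (1::'a m2) = 1" by (simp add: one_m2_def)
qed

end

lemma norm_m2_entries:
  fixes x :: "'a::cbanach_algebra_1 m2"
  shows "norm (m11 x) \<le> norm x" "norm (m12 x) \<le> norm x" "norm (m21 x) \<le> norm x" "norm (m22 x) \<le> norm x"
  by (cases x, simp add: le_max_iff_disj)+

lemma norm_m2_le_sum:
  fixes x :: "'a::cbanach_algebra_1 m2"
  shows "norm x \<le> norm (m11 x) + norm (m12 x) + norm (m21 x) + norm (m22 x)"
proof (cases x)
  case (M2 a b c d)
  have "norm a + norm c \<le> norm a + norm b + norm c + norm d" "norm b + norm d \<le> norm a + norm b + norm c + norm d"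
    by simp_all
  thus ?thesis using M2 by simp
qed

lemma m2_minus_entries:
  "m11 (x - y) = m11 x - m11 y" "m12 (x - y) = m12 x - m12 y" "m21 (x - y) = m21 x - m21 y" "m22 (x - y) = m22 x - m22 y"
  by (cases x; cases y; simp)+

lemma entry_Cauchy:
  fixes X :: "nat \<Rightarrow> 'a::cbanach_algebra_1 m2"
  assumes X: "Cauchy X" and p: "\<And>x y. norm (p x - p y) \<le> norm (x - y)"
  shows "Cauchy (\<lambda>n. p (X n))"
proof (rule CauchyI)
  fix e :: real assume "0 < e"
  then obtain M where "\<forall>m\<ge>M. \<forall>n\<ge>M. norm (X m - X n) < e" using CauchyD[OF X] by blast
  thus "\<exists>M. \<forall>m\<ge>M. \<forall>n\<ge>M. norm (p (X m) - p (X n)) < e" using p le_less_trans by blast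
qed

instance m2 :: (cbanach_algebra_1) banach
proof
  fix X :: "nat \<Rightarrow> 'a m2" assume X: "Cauchy X"
  have p1: "norm (m11 x - m11 y) \<le> norm (x - y)" for x y :: "'a m2"
    using norm_m2_entries(1)[of "x - y"] by (simp add: m2_minus_entries)
  have p2: "norm (m12 x - m12 y) \<le> norm (x - y)" for x y :: "'a m2"
    using norm_m2_entries(2)[of "x - y"] by (simp add: m2_minus_entries)
  have p3: "norm (m21 x - m21 y) \<le> norm (x - y)" for x y :: "'a m2"
    using norm_m2_entries(3)[of "x - y"] by (simp add: m2_minus_entries)
  have p4: "norm (m22 x - m22 y) \<le> norm (x - y)" for x y :: "'a m2"
    using norm_m2_entries(4)[of "x - y"] by (simp add: m2_minus_entries)
  obtain L1 where L1: "(\<lambda>n. m11 (X n)) \<longlonglongrightarrow> L1"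
    using entry_Cauchy[OF X p1] Cauchy_convergent_iff convergent_def by blast
  obtain L2 where L2: "(\<lambda>n. m12 (X n)) \<longlonglongrightarrow> L2"
    using entry_Cauchy[OF X p2] Cauchy_convergent_iff convergent_def by blast
  obtain L3 where L3: "(\<lambda>n. m21 (X n)) \<longlonglongrightarrow> L3"
    using entry_Cauchy[OF X p3] Cauchy_convergent_iff convergent_def by blast
  obtain L4 where L4: "(\<lambda>n. m22 (X n)) \<longlonglongrightarrow> L4"
    using entry_Cauchy[OF X p4] Cauchy_convergent_iff convergent_def by blast
  define L where "L = M2 L1 L2 L3 L4"
  have z1: "(\<lambda>n. norm (m11 (X n) - L1)) \<longlonglongrightarrow> 0" using L1 by (simp add: tendsto_norm_zero LIM_zero)
  have z2: "(\<lambda>n. norm (m12 (X n) - L2)) \<longlonglongrightarrow> 0" using L2 by (simp add: tendsto_norm_zero LIM_zero)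
  have z3: "(\<lambda>n. norm (m21 (X n) - L3)) \<longlonglongrightarrow> 0" using L3 by (simp add: tendsto_norm_zero LIM_zero)
  have z4: "(\<lambda>n. norm (m22 (X n) - L4)) \<longlonglongrightarrow> 0" using L4 by (simp add: tendsto_norm_zero LIM_zero)
  have S: "(\<lambda>n. norm (m11 (X n) - L1) + norm (m12 (X n) - L2) + norm (m21 (X n) - L3) + norm (m22 (X n) - L4)) \<longlonglongrightarrow> 0"
    using tendsto_add[OF tendsto_add[OF tendsto_add[OF z1 z2] z3] z4] by simp
  have "(\<lambda>n. X n - L) \<longlonglongrightarrow> 0"
  proof (rule Lim_null_comparison[OF _ S], intro always_eventually allI)
    fix n
    show "norm (X n - L) \<le> norm (m11 (X n) - L1) + norm (m12 (X n) - L2) + norm (m21 (X n) - L3) + norm (m22 (X n) - L4)"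
      using norm_m2_le_sum[of "X n - L"] unfolding L_def by (simp add: m2_minus_entries)
  qed
  hence "X \<longlonglongrightarrow> L" by (simp add: LIM_zero_iff)
  thus "convergent X" unfolding convergent_def by blast
qed

instance m2 :: (cbanach_algebra_1) cbanach_algebra_1
proof
  fix x :: "'a m2" and r :: real and c :: complex
  show "scaleR r x = cscale (complex_of_real r) x"
    by (cases x) (simp add: scaleR_cscale)
  show "norm (cscale c x) = cmod c * norm x"
    by (cases x) (simp add: norm_cscale max_mult_distrib_left distrib_left)
qed


section \<open>Triangular matrices\<close>

lemma cscale_one_m2: "cscale l (1::'a::calg_1 m2) = M2 (cscale l 1) 0 0 (cscale l 1)"
  by (simp add: one_m2_def)

lemma tri_inv_upper:
  assumes "ring_invertible p" "ring_invertible (q::'a::ring_1)"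
  shows "ring_invertible (M2 p c 0 q)"
proof -
  obtain p' where p: "p * p' = 1" "p' * p = 1" using assms(1) unfolding ring_invertible_def by blast
  obtain q' where q: "q * q' = 1" "q' * q = 1" using assms(2) unfolding ring_invertible_def by blast
  have "M2 p c 0 q * M2 p' (- (p' * c * q')) 0 q' = 1"
    using p q by (simp add: one_m2_def mult.assoc[symmetric])
  moreover have "M2 p' (- (p' * c * q')) 0 q' * M2 p c 0 q = 1"
    using p q by (simp add: one_m2_def mult.assoc)
  ultimately show ?thesis by (rule ring_invertibleI)
qed

lemma tri_inv_lower:
  assumes "ring_invertible p" "ring_invertible (q::'a::ring_1)"
  shows "ring_invertible (M2 p 0 d q)"
proof -
  obtain p' where p: "p * p' = 1" "p' * p = 1" using assms(1) unfolding ring_invertible_def by blast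
  obtain q' where q: "q * q' = 1" "q' * q = 1" using assms(2) unfolding ring_invertible_def by blast
  have "M2 p 0 d q * M2 p' 0 (- (q' * d * p')) q' = 1"
    using p q by (simp add: one_m2_def mult.assoc[symmetric])
  moreover have "M2 p' 0 (- (q' * d * p')) q' * M2 p 0 d q = 1"
    using p q by (simp add: one_m2_def mult.assoc)
  ultimately show ?thesis by (rule ring_invertibleI)
qed

lemma upper_pow: "\<exists>c'. (M2 a c 0 b) ^ n = M2 (a ^ n) c' 0 (b ^ (n::nat))" for a b c :: "'a::ring_1"
proof (induct n)
  case 0 thus ?case by (auto simp: one_m2_def)
next
  case (Suc n)
  then obtain c' where "(M2 a c 0 b) ^ n = M2 (a ^ n) c' 0 (b ^ n)" by blast
  thus ?case by simp
qed

lemma lower_pow: "\<exists>d'. (M2 a 0 d b) ^ n = M2 (a ^ n) 0 d' (b ^ (n::nat))" for a b d :: "'a::ring_1"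
proof (induct n)
  case 0 thus ?case by (auto simp: one_m2_def)
next
  case (Suc n)
  then obtain d' where "(M2 a 0 d b) ^ n = M2 (a ^ n) 0 d' (b ^ n)" by blast
  thus ?case by simp
qed

lemma nq_diag:
  fixes M :: "'a::cbanach_algebra_1 m2"
  assumes "nq M" "\<And>n. m11 (M ^ n) = a ^ n" "\<And>n. m22 (M ^ n) = b ^ n"
  shows "nq a \<and> nq b"
proof -
  have "nq a" unfolding nq_def
  proof (intro allI impI)
    fix \<rho> :: real assume \<rho>: "\<rho> \<ge> 0"
    have L: "(\<lambda>n. \<rho> ^ n * norm (M ^ n)) \<longlonglongrightarrow> 0" using assms(1) \<rho> unfolding nq_def by blast
    show "(\<lambda>n. \<rho> ^ n * norm (a ^ n)) \<longlonglongrightarrow> 0"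
    proof (rule Lim_null_comparison[OF _ L], intro always_eventually allI)
      fix n
      have "norm (a ^ n) \<le> norm (M ^ n)" using norm_m2_entries(1)[of "M ^ n"] assms(2) by simp
      thus "norm (\<rho> ^ n * norm (a ^ n)) \<le> \<rho> ^ n * norm (M ^ n)" using \<rho> by (simp add: mult_left_mono)
    qed
  qed
  moreover have "nq b" unfolding nq_def
  proof (intro allI impI)
    fix \<rho> :: real assume \<rho>: "\<rho> \<ge> 0"
    have L: "(\<lambda>n. \<rho> ^ n * norm (M ^ n)) \<longlonglongrightarrow> 0" using assms(1) \<rho> unfolding nq_def by blast
    show "(\<lambda>n. \<rho> ^ n * norm (b ^ n)) \<longlonglongrightarrow> 0"
    proof (rule Lim_null_comparison[OF _ L], intro always_eventually allI)
      fix n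
      have "norm (b ^ n) \<le> norm (M ^ n)" using norm_m2_entries(4)[of "M ^ n"] assms(3) by simp
      thus "norm (\<rho> ^ n * norm (b ^ n)) \<le> \<rho> ^ n * norm (M ^ n)" using \<rho> by (simp add: mult_left_mono)
    qed
  qed
  ultimately show ?thesis ..
qed

lemma tri_qnil:
  fixes a b c d :: "'a::cbanach_algebra_1"
  assumes M: "M = M2 a c 0 b \<or> M = M2 a 0 d b"
  shows "(qnil a \<and> qnil b) \<longleftrightarrow> qnil M"
proof
  assume "qnil a \<and> qnil b"
  hence qa: "qn a" and qb: "qn b" using qnil_iff_qn by blast+
  have "qn M" unfolding qn_def
  proof (intro allI impI)
    fix l :: complex assume l: "l \<noteq> 0"
    have ia: "ring_invertible (a - cscale l 1)" using qa l unfolding qn_def by blast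
    have ib: "ring_invertible (b - cscale l 1)" using qb l unfolding qn_def by blast
    show "ring_invertible (M - cscale l 1)"
      using M
    proof
      assume "M = M2 a c 0 b"
      thus ?thesis using tri_inv_upper[OF ia ib, of c] by (simp add: cscale_one_m2)
    next
      assume "M = M2 a 0 d b"
      thus ?thesis using tri_inv_lower[OF ia ib, of d] by (simp add: cscale_one_m2)
    qed
  qed
  thus "qnil M" using qnil_iff_qn by blast
next
  assume "qnil M"
  hence nM: "nq M" using qnil_iff_nq by blast
  have e1: "m11 (M ^ n) = a ^ n" and e2: "m22 (M ^ n) = b ^ n" for n
    using M upper_pow[of a c b n] lower_pow[of a d b n] by auto
  have "nq a \<and> nq b" by (rule nq_diag[OF nM e1 e2])
  thus "qnil a \<and> qnil b" using qnil_iff_nq by blast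
qed

lemma tri_diff_pow:
  fixes a b c d :: "'a::cbanach_algebra_1"
  assumes M: "M = M2 a c 0 b \<or> M = M2 a 0 d b"
  shows "\<exists>c' d'. (M - M ^ k = M2 (a - a ^ k) c' 0 (b - b ^ k) \<or> M - M ^ k = M2 (a - a ^ k) 0 d' (b - b ^ k))"
  using M
proof
  assume M1: "M = M2 a c 0 b"
  obtain c' where "(M2 a c 0 b) ^ k = M2 (a ^ k) c' 0 (b ^ k)" using upper_pow by blast
  thus ?thesis using M1 by auto
next
  assume M1: "M = M2 a 0 d b"
  obtain d' where "(M2 a 0 d b) ^ k = M2 (a ^ k) 0 d' (b ^ k)" using lower_pow by blast
  thus ?thesis using M1 by auto
qed

lemma tri_nq_diff_pow:
  fixes a b c d :: "'a::cbanach_algebra_1"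
  assumes M: "M = M2 a c 0 b \<or> M = M2 a 0 d b"
  shows "nq (M - M ^ k) \<longleftrightarrow> nq (a - a ^ k) \<and> nq (b - b ^ k)"
proof -
  obtain c' d' where D: "M - M ^ k = M2 (a - a ^ k) c' 0 (b - b ^ k) \<or> M - M ^ k = M2 (a - a ^ k) 0 d' (b - b ^ k)"
    using tri_diff_pow[OF M] by blast
  have "qnil (M - M ^ k) \<longleftrightarrow> qnil (a - a ^ k) \<and> qnil (b - b ^ k)"
    using tri_qnil[OF D] by simp
  thus ?thesis using qnil_iff_nq[of "M - M ^ k"] qnil_iff_nq[of "a - a ^ k"] qnil_iff_nq[of "b - b ^ k"] by simp
qed

lemma geo_exp:
  fixes a :: "'a::ring_1"
  shows "(a - a ^ (n + 1)) * (\<Sum>j<k. a ^ (n * j)) = a - a ^ (n * k + 1)"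
proof (induct k)
  case 0 thus ?case by simp
next
  case (Suc k)
  have "(a - a ^ (n + 1)) * (\<Sum>j<Suc k. a ^ (n * j)) = (a - a ^ (n * k + 1)) + (a - a ^ (n + 1)) * a ^ (n * k)"
    using Suc by (simp add: distrib_left)
  also have "(a - a ^ (n + 1)) * a ^ (n * k) = a ^ (n * k + 1) - a ^ (n * Suc k + 1)"
  proof -
    have "a * a ^ (n * k) = a ^ (n * k + 1)" by (simp add: power_commutes)
    moreover have "a ^ (n + 1) * a ^ (n * k) = a ^ (n * Suc k + 1)"
      by (simp add: power_add[symmetric] algebra_simps)
    ultimately show ?thesis by (simp add: left_diff_distrib)
  qed
  finally show ?case by simp
qed

lemma nq_exp_mult:
  fixes a :: "'a::cbanach_algebra_1"
  assumes "nq (a - a ^ (n + 1))"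
  shows "nq (a - a ^ (n * k + 1))"
proof -
  have aS: "a \<in> bicomm {a}" by (rule bicomm_base) simp
  have s1: "a - a ^ (n + 1) \<in> bicomm {a}" using aS by (intro bicomm_diff bicomm_pow)
  have s2: "(\<Sum>j<k. a ^ (n * j)) \<in> bicomm {a}"
  proof -
    have "\<forall>j. a ^ (n * j) \<in> bicomm {a}" using aS bicomm_pow by blast
    thus ?thesis
    proof (induct k)
      case 0 thus ?case by (simp add: bicomm_zero)
    next
      case (Suc k) thus ?case by (simp add: bicomm_add)
    qed
  qed
  have "nq ((a - a ^ (n + 1)) * (\<Sum>j<k. a ^ (n * j)))"
    by (rule nq_mult[OF assms bicomm_single_comm[OF s1 s2]])
  thus ?thesis unfolding geo_exp .
qed

theorem lemma4p5:
  fixes a b c d :: "'a::cbanach_algebra_1" and M :: "'a m2"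
  assumes "M = M2 a c 0 b \<or> M = M2 a 0 d b"
  shows "((qnil a \<and> qnil b) \<longleftrightarrow> qnil M)
     \<and> ((gpi_hirano a \<and> gpi_hirano b) \<longleftrightarrow> gpi_hirano M)"
proof
  show "(qnil a \<and> qnil b) \<longleftrightarrow> qnil M" by (rule tri_qnil[OF assms])
  show "(gpi_hirano a \<and> gpi_hirano b) \<longleftrightarrow> gpi_hirano M"
  proof
    assume "gpi_hirano a \<and> gpi_hirano b"
    then obtain n m where n: "n > 0" "nq (a - a ^ (n + 1))" and m: "m > 0" "nq (b - b ^ (m + 1))"
      using char_gpi[of a] char_gpi[of b] by blast
    have A: "nq (a - a ^ (n * m + 1))" by (rule nq_exp_mult[OF n(2)])
    have B: "nq (b - b ^ (m * n + 1))" by (rule nq_exp_mult[OF m(2)])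
    hence B': "nq (b - b ^ (n * m + 1))" by (simp add: mult.commute)
    have "nq (M - M ^ (n * m + 1))" using tri_nq_diff_pow[OF assms, of "n * m + 1"] A B' by blast
    moreover have "n * m > 0" using n m by simp
    ultimately show "gpi_hirano M" using char_gpi[of M] by blast
  next
    assume "gpi_hirano M"
    then obtain n where n: "n > 0" "nq (M - M ^ (n + 1))" using char_gpi[of M] by blast
    hence "nq (a - a ^ (n + 1)) \<and> nq (b - b ^ (n + 1))" using tri_nq_diff_pow[OF assms, of "n + 1"] by blast
    thus "gpi_hirano a \<and> gpi_hirano b" using char_gpi[of a] char_gpi[of b] n(1) by blast
  qed
qed


end
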